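(* Under the asymptotic scaling assumption, let $\widehat{V}$ be a (data-dependent) variance estimator such that for every $\epsilon>0$, $\lim_{n\to\infty}\Pr\big(n\,\mathrm{var}(\overline{X}) - n\widehat{V}>\epsilon\big)=0$. Then for $\alpha\in(0,1)$ and $z_{1-\alpha/2}$ the $(1-\alpha/2)$-quantile of the standard normal distribution, the confidence intervals $\overline{X}\pm z_{1-\alpha/2}\sqrt{\widehat{V}}$ have asymptotic coverage for $\mu$ of at least $100(1-\alpha)\%$, i.e. $\liminf_{n\to\infty}\Pr\big(|\overline{X}-\mu|\le z_{1-\alpha/2}\sqrt{\widehat{V}}\big)\ge 1-\alpha$.
   Context: Setting: $\mathcal{G}=(\mathcal{V},\mathcal{E})$ is a simple undirected graph with a real random variable $X_i$ attached to each vertex $i$. $\mathcal{G}$ is a dependency graph: for all disjoint $\mathcal{V}_1,\mathcal{V}_2\subset\mathcal{V}$ such that no edge of $\mathcal{E}$ joins a vertex of $\mathcal{V}_1$ to a vertex of $\mathcal{V}_2$, $\{X_i:i\in\mathcal{V}_1\}$ is independent of $\{X_j:j\in\mathcal{V}_2\}$. A subset $\mathcal{V}_S\subseteq\mathcal{V}$ with $|\mathcal{V}_S|=n$ is observed, labeled $1,\dots,n$. $\mathcal{G}_S=(\mathcal{V}_S,\mathcal{E}_S)$ is the induced subgraph on $\mathcal{V}_S$, with $n\times n$ adjacency matrix $\mathbf{A}^\circ$. Let $\mu=\frac1n\sum_{i=1}^n \mathrm{E}[X_i]$ and $\overline{X}=\frac1n\sum_i X_i$. Asymptotic scaling assumption: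 a sequence, indexed by $n\to\infty$, of such settings (nested graphs with $|\mathcal{V}|=N_n\ge n$, $|\mathcal{V}_S|=n$), with finite positive constants $c_1,c_2,c_3$ independent of $n$ such that: $\Pr(|X_i-\mu|>c_1)=0$ for all $i\in\mathcal{V}_S$; $\sum_{j}\mathbf{A}^\circ_{ij}\le c_2$ for all $i\in\mathcal{V}_S$; and $\lim_{n\to\infty} n\,\mathrm{var}(\overline{X})=c_3$. *)

theory Defs
  imports "HOL-Probability.Probability"
begin

definition simple_graph :: "'v set \<Rightarrow> ('v \<Rightarrow> 'v \<Rightarrow> bool) \<Rightarrow> bool" where
  "simple_graph V E \<longleftrightarrow> (\<forall>i j. E i j \<longrightarrow> i \<in> V \<and> j \<in> V) \<and>
     (\<forall>i j. E i j \<longrightarrow> E j i) \<and> (\<forall>i. \<not> E i i)"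

definition dependency_graph ::
  "'a measure \<Rightarrow> 'v set \<Rightarrow> ('v \<Rightarrow> 'v \<Rightarrow> bool) \<Rightarrow> ('v \<Rightarrow> 'a \<Rightarrow> real) \<Rightarrow> bool" where
  "dependency_graph M V E X \<longleftrightarrow>
     simple_graph V E \<and> (\<forall>i\<in>V. X i \<in> borel_measurable M) \<and>
     (\<forall>V1 V2. V1 \<subseteq> V \<longrightarrow> V2 \<subseteq> V \<longrightarrow> V1 \<inter> V2 = {} \<longrightarrow>
        (\<forall>i\<in>V1. \<forall>j\<in>V2. \<not> E i j) \<longrightarrow>
        prob_space.indep_var M
          (PiM V1 (\<lambda>_. borel)) (\<lambda>\<omega>. \<lambda>i\<in>V1. X i \<omega>)
          (PiM V2 (\<lambda>_. borel)) (\<lambda>\<omega>. \<lambda>j\<in>V2. X j \<omega>))"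

definition std_normal :: "real measure" where
  "std_normal = density lborel std_normal_density"

definition std_normal_cdf :: "real \<Rightarrow> real" where
  "std_normal_cdf x = cdf std_normal x"

definition std_normal_quantile :: "real \<Rightarrow> real" where
  "std_normal_quantile p = (THE z. std_normal_cdf z = p)"

end

theory Submission
  imports Defs
begin


lemma (in finite_measure) bint:
  fixes f :: "'a \<Rightarrow> 'b::{banach, second_countable_topology}"
  shows "f \<in> borel_measurable M \<Longrightarrow> (\<And>\<omega>. norm (f \<omega>) \<le> C) \<Longrightarrow> integrable M f"
  by (rule integrable_const_bound[where B=C]) auto

lemma (in prob_space) bnorm:
  fixes f :: "'a \<Rightarrow> 'b::{banach, second_countable_topology}"
  assumes "f \<in> borel_measurable M" "\<And>\<omega>. norm (f \<omega>) \<le> C"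
  shows "norm (integral\<^sup>L M f) \<le> C"
proof -
  have "norm (integral\<^sup>L M f) \<le> integral\<^sup>L M (\<lambda>\<omega>. norm (f \<omega>))" by (rule integral_norm_bound)
  also have "\<dots> \<le> integral\<^sup>L M (\<lambda>\<omega>. C)"
    using assms order_trans[OF norm_ge_zero assms(2)] by (intro integral_mono bint[where C=C]) auto
  also have "\<dots> = C" by (simp add: prob_space)
  finally show ?thesis .
qed

lemma iexp_1: "cmod (iexp x - 1) \<le> \<bar>x\<bar>"
  using iexp_approx1[of x 0] by simp

lemma iexp_2: "cmod (iexp x - 1 - \<i> * x) \<le> x\<^sup>2 / 2"
  using iexp_approx1[of x 1] by (simp add: power2_eq_square diff_diff_eq)

lemma norm_iexp[simp]: "cmod (iexp x) = 1"
  by simp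


lemma abs_sum_le_card:
  fixes f :: "'v \<Rightarrow> real"
  assumes "\<And>j. \<bar>f j\<bar> \<le> b"
  shows "\<bar>\<Sum>j\<in>A. f j\<bar> \<le> real (card A) * b"
proof -
  have "\<bar>\<Sum>j\<in>A. f j\<bar> \<le> (\<Sum>j\<in>A. \<bar>f j\<bar>)" by (rule sum_abs)
  also have "\<dots> \<le> real (card A) * b" using sum_bounded_above[of A "\<lambda>j. \<bar>f j\<bar>" b] assms by simp
  finally show ?thesis .
qed

lemma abs_sum_le_D:
  fixes f :: "'v \<Rightarrow> real"
  assumes "\<And>j. \<bar>f j\<bar> \<le> b" "real (card A) \<le> D" "b \<ge> 0"
  shows "\<bar>\<Sum>j\<in>A. f j\<bar> \<le> D * b"
  using abs_sum_le_card[of f b A, OF assms(1)] mult_right_mono[OF assms(2,3)] by linarith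

lemma (in prob_space) core_i:
  fixes Y :: "'v \<Rightarrow> 'a \<Rightarrow> real" and S N1 N2 :: "'v set" and i :: 'v and b D D2 t :: real
  assumes fin: "finite S"
    and [measurable]: "\<And>j. Y j \<in> borel_measurable M"
    and bY: "\<And>j \<omega>. \<bar>Y j \<omega>\<bar> \<le> b"
    and sub: "N1 \<subseteq> S" "N1 \<subseteq> N2" "N2 \<subseteq> S"
    and cN1: "real (card N1) \<le> D" and cN2: "real (card N2) \<le> D2"
    and ind1: "(CLINT \<omega>|M. of_real (Y i \<omega>) * iexp (t * (\<Sum>j\<in>S-N1. Y j \<omega>))) = 0"
    and ind2: "(CLINT \<omega>|M. of_real (Y i \<omega> * (\<Sum>j\<in>N1. Y j \<omega>)) * iexp (t * (\<Sum>j\<in>S-N2. Y j \<omega>)))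
       = of_real (LINT \<omega>|M. Y i \<omega> * (\<Sum>j\<in>N1. Y j \<omega>)) * (CLINT \<omega>|M. iexp (t * (\<Sum>j\<in>S-N2. Y j \<omega>)))"
  shows "cmod ((CLINT \<omega>|M. of_real (Y i \<omega>) * iexp (t * (\<Sum>j\<in>S. Y j \<omega>)))
           - \<i> * of_real t * of_real (LINT \<omega>|M. Y i \<omega> * (\<Sum>j\<in>N1. Y j \<omega>))
               * (CLINT \<omega>|M. iexp (t * (\<Sum>j\<in>S. Y j \<omega>))))
         \<le> b^3 * t\<^sup>2 * (D\<^sup>2 / 2 + 2 * D * D2)"
proof -
  have b0: "b \<ge> 0" using bY[of i undefined] by simp
  have fN1: "finite N1" "finite N2" using sub fin by (auto intro: finite_subset)
  have D0: "D \<ge> 0" using cN1 by (meson of_nat_0_le_iff order_trans)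
  have D20: "D2 \<ge> 0" using cN2 by (meson of_nat_0_le_iff order_trans)
  define y where "y \<omega> = Y i \<omega>" for \<omega>
  define U where "U \<omega> = (\<Sum>j\<in>N1. Y j \<omega>)" for \<omega>
  define R1 where "R1 \<omega> = (\<Sum>j\<in>S-N1. Y j \<omega>)" for \<omega>
  define R2 where "R2 \<omega> = (\<Sum>j\<in>S-N2. Y j \<omega>)" for \<omega>
  define Dv where "Dv \<omega> = (\<Sum>j\<in>N2-N1. Y j \<omega>)" for \<omega>
  define W where "W \<omega> = (\<Sum>j\<in>S. Y j \<omega>)" for \<omega>
  define G where "G \<omega> = (\<Sum>j\<in>N2. Y j \<omega>)" for \<omega>
  have [measurable]: "y \<in> borel_measurable M" "U \<in> borel_measurable M" "R1 \<in> borel_measurable M"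
    "R2 \<in> borel_measurable M" "Dv \<in> borel_measurable M" "W \<in> borel_measurable M" "G \<in> borel_measurable M"
    unfolding y_def U_def R1_def R2_def Dv_def W_def G_def by measurable
  have WUR1: "W \<omega> = U \<omega> + R1 \<omega>" for \<omega>
    unfolding W_def U_def R1_def using sum.subset_diff[OF sub(1) fin, of "\<lambda>j. Y j \<omega>"] by simp
  have R1DR2: "R1 \<omega> = Dv \<omega> + R2 \<omega>" for \<omega>
  proof -
    have "N2 - N1 \<subseteq> S - N1" using sub by auto
    moreover have "(S - N1) - (N2 - N1) = S - N2" using sub by auto
    ultimately show ?thesis unfolding R1_def Dv_def R2_def
      using sum.subset_diff[of "N2 - N1" "S - N1" "\<lambda>j. Y j \<omega>"] fin by simp
  qed
  have WGR2: "W \<omega> = G \<omega> + R2 \<omega>" for \<omega>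
    unfolding W_def G_def R2_def using sum.subset_diff[OF sub(3) fin, of "\<lambda>j. Y j \<omega>"] by simp
  have by_: "\<bar>y \<omega>\<bar> \<le> b" for \<omega> unfolding y_def by (rule bY)
  have bU: "\<bar>U \<omega>\<bar> \<le> D * b" for \<omega> unfolding U_def by (rule abs_sum_le_D[OF bY cN1 b0])
  have bG: "\<bar>G \<omega>\<bar> \<le> D2 * b" for \<omega> unfolding G_def by (rule abs_sum_le_D[OF bY cN2 b0])
  have cDv: "real (card (N2 - N1)) \<le> D2"
    using card_mono[OF fN1(2), of "N2 - N1"] cN2 by auto
  have bDv: "\<bar>Dv \<omega>\<bar> \<le> D2 * b" for \<omega> unfolding Dv_def by (rule abs_sum_le_D[OF bY cDv b0])
  have byU: "\<bar>y \<omega> * U \<omega>\<bar> \<le> b * (D * b)" for \<omega>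
    unfolding abs_mult using b0 by (intro mult_mono by_ bU) auto

  define e where "e \<omega> = iexp (t * W \<omega>)" for \<omega>
  define e1 where "e1 \<omega> = iexp (t * R1 \<omega>)" for \<omega>
  define e2 where "e2 \<omega> = iexp (t * R2 \<omega>)" for \<omega>
  define f1 where "f1 \<omega> = of_real (y \<omega>) * e1 \<omega>" for \<omega>
  define f2 where "f2 \<omega> = of_real (y \<omega>) * e1 \<omega> * (iexp (t * U \<omega>) - 1 - \<i> * of_real (t * U \<omega>))" for \<omega>
  define f3 where "f3 \<omega> = \<i> * of_real t * (of_real (y \<omega> * U \<omega>) * e2 \<omega>)" for \<omega>
  define f4 where "f4 \<omega> = \<i> * of_real t * (of_real (y \<omega> * U \<omega>) * e2 \<omega> * (iexp (t * Dv \<omega>) - 1))" for \<omega>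
  have [measurable]: "e \<in> borel_measurable M" "e1 \<in> borel_measurable M" "e2 \<in> borel_measurable M"
    "f1 \<in> borel_measurable M" "f2 \<in> borel_measurable M" "f3 \<in> borel_measurable M" "f4 \<in> borel_measurable M"
    unfolding e_def e1_def e2_def f1_def f2_def f3_def f4_def by measurable
  have decomp: "of_real (y \<omega>) * e \<omega> = f1 \<omega> + f2 \<omega> + f3 \<omega> + f4 \<omega>" for \<omega>
  proof -
    have "e \<omega> = e1 \<omega> * iexp (t * U \<omega>)"
      unfolding e_def e1_def WUR1 by (simp add: exp_add[symmetric] algebra_simps)
    moreover have "e1 \<omega> = e2 \<omega> * iexp (t * Dv \<omega>)"
      unfolding e2_def e1_def R1DR2 by (simp add: exp_add[symmetric] algebra_simps)
    ultimately show ?thesis unfolding f1_def f2_def f3_def f4_def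
      by (simp add: algebra_simps)
  qed
  have i1: "integrable M f1" by (rule bint[where C=b]) (auto simp: f1_def e1_def norm_mult by_)
  have b2: "cmod (f2 \<omega>) \<le> b * (t\<^sup>2 * (D * b)\<^sup>2 / 2)" for \<omega>
  proof -
    have "cmod (iexp (t * U \<omega>) - 1 - \<i> * of_real (t * U \<omega>)) \<le> (t * U \<omega>)\<^sup>2 / 2"
      by (rule iexp_2)
    also have "\<dots> \<le> t\<^sup>2 * (D * b)\<^sup>2 / 2"
    proof -
      have "(U \<omega>)\<^sup>2 \<le> (D * b)\<^sup>2" using bU[of \<omega>] by (metis abs_le_square_iff abs_of_nonneg order_trans abs_ge_zero)
      then show ?thesis by (simp add: power_mult_distrib mult_left_mono)
    qed
    finally have Q: "cmod (iexp (t * U \<omega>) - 1 - \<i> * of_real (t * U \<omega>)) \<le> t\<^sup>2 * (D * b)\<^sup>2 / 2" .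
    have "cmod (f2 \<omega>) = \<bar>y \<omega>\<bar> * cmod (iexp (t * U \<omega>) - 1 - \<i> * of_real (t * U \<omega>))"
      unfolding f2_def e1_def norm_mult by simp
    also have "\<dots> \<le> b * (t\<^sup>2 * (D * b)\<^sup>2 / 2)" using Q by_[of \<omega>] b0 by (intro mult_mono) auto
    finally show ?thesis .
  qed
  have i2: "integrable M f2" by (rule bint[OF _ b2]) simp
  have i3: "integrable M f3" by (rule bint[where C="\<bar>t\<bar> * (b * (D * b))"]) (auto simp: f3_def e2_def norm_mult intro!: mult_left_mono byU[unfolded abs_mult])
  have b4: "cmod (f4 \<omega>) \<le> \<bar>t\<bar> * (b * (D * b) * (\<bar>t\<bar> * (D2 * b)))" for \<omega>
  proof -
    have "cmod (iexp (t * Dv \<omega>) - 1) \<le> \<bar>t * Dv \<omega>\<bar>" by (rule iexp_1)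
    also have "\<dots> \<le> \<bar>t\<bar> * (D2 * b)" unfolding abs_mult by (intro mult_left_mono bDv) auto
    finally have "cmod (iexp (t * Dv \<omega>) - 1) \<le> \<bar>t\<bar> * (D2 * b)" .
    then show ?thesis unfolding f4_def norm_mult e2_def using byU[of \<omega>] b0 D0
      by (auto intro!: mult_left_mono mult_mono simp del: abs_mult of_real_mult simp: abs_mult[symmetric])
  qed
  have i4: "integrable M f4" by (rule bint[OF _ b4]) simp
  define c where "c = (LINT \<omega>|M. y \<omega> * U \<omega>)"
  define \<phi> where "\<phi> = (CLINT \<omega>|M. e \<omega>)"
  define \<phi>2 where "\<phi>2 = (CLINT \<omega>|M. e2 \<omega>)"
  have I1: "integral\<^sup>L M f1 = 0" using ind1 unfolding f1_def y_def e1_def R1_def .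
  have I3: "integral\<^sup>L M f3 = \<i> * of_real t * (of_real c * \<phi>2)"
    using ind2 unfolding f3_def c_def \<phi>2_def y_def U_def e2_def R2_def by simp
  have A: "(CLINT \<omega>|M. of_real (y \<omega>) * e \<omega>) = integral\<^sup>L M f2 + \<i> * of_real t * (of_real c * \<phi>2) + integral\<^sup>L M f4"
    unfolding decomp using i1 i2 i3 i4 I1 I3 by simp
  have bc: "\<bar>c\<bar> \<le> b * (D * b)" unfolding c_def using bnorm[of "\<lambda>\<omega>. y \<omega> * U \<omega>"] byU by simp
  have bphi: "cmod (\<phi>2 - \<phi>) \<le> \<bar>t\<bar> * (D2 * b)"
  proof -
    have "\<phi>2 - \<phi> = (CLINT \<omega>|M. e2 \<omega> - e \<omega>)" unfolding \<phi>2_def \<phi>_def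
      by (subst Bochner_Integration.integral_diff) (auto intro!: bint[where C=1] simp: e_def e2_def)
    also have "cmod \<dots> \<le> \<bar>t\<bar> * (D2 * b)"
    proof (rule bnorm)
      fix \<omega>
      have "e2 \<omega> - e \<omega> = e2 \<omega> * (1 - iexp (t * G \<omega>))"
        unfolding e2_def e_def WGR2 by (simp add: exp_add[symmetric] algebra_simps)
      then have "cmod (e2 \<omega> - e \<omega>) = cmod (iexp (t * G \<omega>) - 1)"
        unfolding e2_def by (simp add: norm_mult norm_minus_commute)
      also have "\<dots> \<le> \<bar>t * G \<omega>\<bar>" by (rule iexp_1)
      also have "\<dots> \<le> \<bar>t\<bar> * (D2 * b)" unfolding abs_mult by (intro mult_left_mono bG) auto
      finally show "cmod (e2 \<omega> - e \<omega>) \<le> \<bar>t\<bar> * (D2 * b)" .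
    qed measurable
    finally show ?thesis .
  qed
  have "(CLINT \<omega>|M. of_real (y \<omega>) * e \<omega>) - \<i> * of_real t * of_real c * \<phi>
      = integral\<^sup>L M f2 + integral\<^sup>L M f4 + \<i> * of_real t * of_real c * (\<phi>2 - \<phi>)"
    unfolding A by (simp add: algebra_simps)
  also have "cmod \<dots> \<le> b * (t\<^sup>2 * (D * b)\<^sup>2 / 2) + \<bar>t\<bar> * (b * (D * b) * (\<bar>t\<bar> * (D2 * b)))
       + \<bar>t\<bar> * (b * (D * b)) * (\<bar>t\<bar> * (D2 * b))"
  proof -
    have n2: "cmod (integral\<^sup>L M f2) \<le> b * (t\<^sup>2 * (D * b)\<^sup>2 / 2)" by (rule bnorm[OF _ b2]) simp
    have n4: "cmod (integral\<^sup>L M f4) \<le> \<bar>t\<bar> * (b * (D * b) * (\<bar>t\<bar> * (D2 * b)))" by (rule bnorm[OF _ b4]) simp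
    have n5: "cmod (\<i> * of_real t * of_real c * (\<phi>2 - \<phi>)) \<le> \<bar>t\<bar> * (b * (D * b)) * (\<bar>t\<bar> * (D2 * b))"
      unfolding norm_mult using bc bphi by (auto intro!: mult_mono)
    show ?thesis using n2 n4 n5 norm_triangle_le[OF add_mono[OF norm_triangle_ineq]] 
      by (smt (verit) norm_triangle_ineq)
  qed
  also have "\<dots> = b^3 * t\<^sup>2 * (D\<^sup>2 / 2 + 2 * D * D2)"
    by (simp add: power2_eq_square power3_eq_cube algebra_simps abs_mult_self_eq)
  finally show ?thesis unfolding y_def e_def W_def c_def U_def \<phi>_def by simp
qed

lemma (in prob_space) core:
  fixes Y :: "'v \<Rightarrow> 'a \<Rightarrow> real" and S :: "'v set" and N N2 :: "'v \<Rightarrow> 'v set" and b D D2 t :: real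
  assumes fin: "finite S"
    and [measurable]: "\<And>j. Y j \<in> borel_measurable M"
    and bY: "\<And>j \<omega>. \<bar>Y j \<omega>\<bar> \<le> b"
    and sub: "\<And>i. i \<in> S \<Longrightarrow> N i \<subseteq> S" "\<And>i. i \<in> S \<Longrightarrow> N i \<subseteq> N2 i" "\<And>i. i \<in> S \<Longrightarrow> N2 i \<subseteq> S"
    and cN1: "\<And>i. i \<in> S \<Longrightarrow> real (card (N i)) \<le> D" and cN2: "\<And>i. i \<in> S \<Longrightarrow> real (card (N2 i)) \<le> D2"
    and ind1: "\<And>i. i \<in> S \<Longrightarrow> (CLINT \<omega>|M. of_real (Y i \<omega>) * iexp (t * (\<Sum>j\<in>S-N i. Y j \<omega>))) = 0"
    and ind2: "\<And>i. i \<in> S \<Longrightarrow> (CLINT \<omega>|M. of_real (Y i \<omega> * (\<Sum>j\<in>N i. Y j \<omega>)) * iexp (t * (\<Sum>j\<in>S-N2 i. Y j \<omega>)))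
       = of_real (LINT \<omega>|M. Y i \<omega> * (\<Sum>j\<in>N i. Y j \<omega>)) * (CLINT \<omega>|M. iexp (t * (\<Sum>j\<in>S-N2 i. Y j \<omega>)))"
    and var1: "(\<Sum>i\<in>S. LINT \<omega>|M. Y i \<omega> * (\<Sum>j\<in>N i. Y j \<omega>)) = 1"
  shows "cmod ((CLINT \<omega>|M. \<i> * of_real (\<Sum>j\<in>S. Y j \<omega>) * iexp (t * (\<Sum>j\<in>S. Y j \<omega>)))
            + of_real t * (CLINT \<omega>|M. iexp (t * (\<Sum>j\<in>S. Y j \<omega>))))
         \<le> real (card S) * (b^3 * (D\<^sup>2 / 2 + 2 * D * D2)) * t\<^sup>2"
proof -
  have b0: "b \<ge> 0" using bY[of undefined undefined] by simp
  define e where "e \<omega> = iexp (t * (\<Sum>j\<in>S. Y j \<omega>))" for \<omega>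
  have [measurable]: "e \<in> borel_measurable M" unfolding e_def by measurable
  define A where "A i = (CLINT \<omega>|M. of_real (Y i \<omega>) * e \<omega>)" for i
  define c where "c i = (LINT \<omega>|M. Y i \<omega> * (\<Sum>j\<in>N i. Y j \<omega>))" for i
  define \<phi> where "\<phi> = (CLINT \<omega>|M. e \<omega>)"
  have intA: "integrable M (\<lambda>\<omega>. \<i> * (of_real (Y i \<omega>) * e \<omega>))" for i
    by (rule bint[where C=b]) (auto simp: norm_mult e_def bY)
  have "(CLINT \<omega>|M. \<i> * of_real (\<Sum>j\<in>S. Y j \<omega>) * e \<omega>)
      = (CLINT \<omega>|M. (\<Sum>i\<in>S. \<i> * (of_real (Y i \<omega>) * e \<omega>)))"
    by (simp add: sum_distrib_left sum_distrib_right algebra_simps)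
  also have "\<dots> = (\<Sum>i\<in>S. \<i> * A i)" unfolding A_def
    by (subst Bochner_Integration.integral_sum) (use intA in auto)
  finally have dphi: "(CLINT \<omega>|M. \<i> * of_real (\<Sum>j\<in>S. Y j \<omega>) * e \<omega>) = (\<Sum>i\<in>S. \<i> * A i)" .
  have "(\<Sum>i\<in>S. \<i> * A i) + of_real t * \<phi> = \<i> * (\<Sum>i\<in>S. A i - \<i> * of_real t * of_real (c i) * \<phi>)
      + of_real t * \<phi> * (1 - of_real (\<Sum>i\<in>S. c i))"
    by (simp add: sum_subtractf sum_distrib_left sum_distrib_right algebra_simps sum_negf)
  also have "\<dots> = \<i> * (\<Sum>i\<in>S. A i - \<i> * of_real t * of_real (c i) * \<phi>)"
    using var1 unfolding c_def by simp
  finally have eq: "(\<Sum>i\<in>S. \<i> * A i) + of_real t * \<phi> = \<i> * (\<Sum>i\<in>S. A i - \<i> * of_real t * of_real (c i) * \<phi>)" .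
  have bi: "cmod (A i - \<i> * of_real t * of_real (c i) * \<phi>) \<le> b^3 * (D\<^sup>2 / 2 + 2 * D * D2) * t\<^sup>2"
    if "i \<in> S" for i
    using core_i[OF fin _ bY sub(1)[OF that] sub(2)[OF that] sub(3)[OF that] cN1[OF that] cN2[OF that]
        ind1[OF that] ind2[OF that]]
    unfolding A_def c_def \<phi>_def e_def by (simp add: algebra_simps)
  have "cmod ((\<Sum>i\<in>S. \<i> * A i) + of_real t * \<phi>) \<le> (\<Sum>i\<in>S. cmod (A i - \<i> * of_real t * of_real (c i) * \<phi>))"
    unfolding eq norm_mult by (simp add: norm_sum)
  also have "\<dots> \<le> real (card S) * (b^3 * (D\<^sup>2 / 2 + 2 * D * D2) * t\<^sup>2)"
    using sum_bounded_above[of S "\<lambda>i. cmod (A i - \<i> * of_real t * of_real (c i) * \<phi>)"] bi by simp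
  finally show ?thesis unfolding dphi[symmetric] \<phi>_def e_def by (simp add: algebra_simps)
qed

lemma ode_seg:
  fixes \<psi> \<psi>' :: "real \<Rightarrow> complex" and B a b :: real
  assumes d: "\<And>s. (\<psi> has_vector_derivative \<psi>' s) (at s)"
    and bnd: "\<And>s. a \<le> s \<Longrightarrow> s \<le> b \<Longrightarrow> norm (\<psi>' s) \<le> B"
    and ab: "a \<le> b"
  shows "norm (\<psi> b - \<psi> a) \<le> B * (b - a)"
proof (cases "a = b")
  case False
  then have "a < b" using ab by simp
  have cont: "continuous_on {a..b} \<psi>"
    using d by (meson continuous_at_imp_continuous_on has_vector_derivative_continuous)
  have "norm (\<psi> b - \<psi> a) \<le> B * b - B * a"
    by (rule differentiable_bound_general[OF \<open>a < b\<close> cont _ d, where \<phi>="\<lambda>x. B * x" and \<phi>'="\<lambda>_. B"])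
       (auto intro!: continuous_intros derivative_eq_intros bnd simp: has_real_derivative_iff_has_vector_derivative[symmetric])
  then show ?thesis by (simp add: algebra_simps)
qed simp

lemma ode_bound:
  fixes \<phi> \<phi>' :: "real \<Rightarrow> complex" and \<delta> t :: real
  assumes d: "\<And>t. (\<phi> has_vector_derivative \<phi>' t) (at t)"
    and \<phi>0: "\<phi> 0 = 1" and \<delta>: "\<delta> \<ge> 0"
    and e: "\<And>t. cmod (\<phi>' t + of_real t * \<phi> t) \<le> \<delta> * (\<bar>t\<bar> + t\<^sup>2)"
  shows "cmod (\<phi> t - of_real (exp (- t\<^sup>2 / 2))) \<le> \<delta> * \<bar>t\<bar> * (\<bar>t\<bar> + t\<^sup>2)"
proof -
  define \<psi> where "\<psi> s = exp (s\<^sup>2 / 2) *\<^sub>R \<phi> s" for s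
  define \<psi>' where "\<psi>' s = exp (s\<^sup>2 / 2) *\<^sub>R (\<phi>' s + of_real s * \<phi> s)" for s
  have dpsi: "(\<psi> has_vector_derivative \<psi>' s) (at s)" for s
  proof -
    have "((\<lambda>s. exp (s\<^sup>2 / 2)) has_field_derivative (exp (s\<^sup>2 / 2) * s)) (at s)"
      by (auto intro!: derivative_eq_intros)
    from has_vector_derivative_scaleR[OF this d]
    show ?thesis unfolding \<psi>_def \<psi>'_def
      by (simp add: scaleR_add_right algebra_simps scaleR_conv_of_real)
  qed
  define B where "B = exp (t\<^sup>2 / 2) * (\<delta> * (\<bar>t\<bar> + t\<^sup>2))"
  have bnd: "norm (\<psi>' s) \<le> B" if "\<bar>s\<bar> \<le> \<bar>t\<bar>" for s
  proof -
    have s2: "s\<^sup>2 \<le> t\<^sup>2" using that by (simp add: abs_le_square_iff)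
    have "norm (\<psi>' s) = exp (s\<^sup>2 / 2) * cmod (\<phi>' s + of_real s * \<phi> s)"
      unfolding \<psi>'_def by simp
    also have "\<dots> \<le> exp (t\<^sup>2 / 2) * (\<delta> * (\<bar>s\<bar> + s\<^sup>2))"
      by (intro mult_mono e) (use s2 in auto)
    also have "\<dots> \<le> B" unfolding B_def
      using that s2 \<delta> by (intro mult_left_mono) auto
    finally show ?thesis .
  qed
  have main: "norm (\<psi> t - \<psi> 0) \<le> B * \<bar>t\<bar>"
  proof (cases "t \<ge> 0")
    case True
    then show ?thesis using ode_seg[OF dpsi, of 0 t B] bnd by auto
  next
    case False
    then have "norm (\<psi> 0 - \<psi> t) \<le> B * (0 - t)" using ode_seg[OF dpsi, of t 0 B] bnd by auto
    then show ?thesis using False by (simp add: norm_minus_commute)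
  qed
  have "\<phi> t - of_real (exp (- t\<^sup>2 / 2)) = exp (- t\<^sup>2 / 2) *\<^sub>R (\<psi> t - \<psi> 0)"
  proof -
    have "complex_of_real (exp (t\<^sup>2 / 2)) * complex_of_real (exp (- (t\<^sup>2 / 2))) = 1"
      by (simp flip: of_real_mult exp_add)
    then show ?thesis
      unfolding \<psi>_def using \<phi>0 by (simp add: algebra_simps scaleR_conv_of_real)
  qed
  then have "cmod (\<phi> t - of_real (exp (- t\<^sup>2 / 2))) = exp (- t\<^sup>2 / 2) * norm (\<psi> t - \<psi> 0)" by simp
  also have "\<dots> \<le> exp (- t\<^sup>2 / 2) * (B * \<bar>t\<bar>)" using main by (intro mult_left_mono) auto
  also have "\<dots> = \<delta> * \<bar>t\<bar> * (\<bar>t\<bar> + t\<^sup>2)" unfolding B_def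
    by (simp add: exp_minus_inverse field_simps)
  finally show ?thesis .
qed

lemma (in prob_space) char_deriv:
  fixes W :: "'a \<Rightarrow> real"
  assumes [measurable]: "W \<in> borel_measurable M" and bW: "\<And>\<omega>. \<bar>W \<omega>\<bar> \<le> B"
  shows "((\<lambda>t. CLINT \<omega>|M. iexp (t * W \<omega>)) has_vector_derivative
            (CLINT \<omega>|M. \<i> * W \<omega> * iexp (t * W \<omega>))) (at t)"
proof -
  have B0: "B \<ge> 0" using bW[of undefined] by simp
  define f where "f s = (CLINT \<omega>|M. iexp (s * W \<omega>))" for s
  define f' where "f' = (CLINT \<omega>|M. \<i> * W \<omega> * iexp (t * W \<omega>))"
  have i1: "integrable M (\<lambda>\<omega>. iexp (s * W \<omega>))" for s
    by (rule bint[where C=1]) auto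
  have i2: "integrable M (\<lambda>\<omega>. \<i> * W \<omega> * iexp (t * W \<omega>))"
    by (rule bint[where C=B]) (auto simp: norm_mult bW)
  have key: "norm (f y - f t - (y - t) *\<^sub>R f') \<le> (B\<^sup>2 / 2) * (y - t)\<^sup>2" for y
  proof -
    have "f y - f t - (y - t) *\<^sub>R f' =
        (CLINT \<omega>|M. iexp (y * W \<omega>) - iexp (t * W \<omega>) - (y - t) *\<^sub>R (\<i> * W \<omega> * iexp (t * W \<omega>)))"
      unfolding f_def f'_def using i1 i2
      by (simp add: integral_diff integral_scaleR_right)
    also have "\<dots> = (CLINT \<omega>|M. iexp (t * W \<omega>) * (iexp ((y - t) * W \<omega>) - 1 - \<i> * ((y - t) * W \<omega>)))"
    proof (intro Bochner_Integration.integral_cong refl)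
      fix \<omega>
      have "iexp (y * W \<omega>) = iexp (t * W \<omega>) * iexp ((y - t) * W \<omega>)"
        by (simp add: exp_add[symmetric] algebra_simps)
      then show "iexp (y * W \<omega>) - iexp (t * W \<omega>) - (y - t) *\<^sub>R (\<i> * W \<omega> * iexp (t * W \<omega>)) =
          iexp (t * W \<omega>) * (iexp ((y - t) * W \<omega>) - 1 - \<i> * ((y - t) * W \<omega>))"
        by (simp add: algebra_simps scaleR_conv_of_real)
    qed
    also have "norm \<dots> \<le> (B\<^sup>2 / 2) * (y - t)\<^sup>2"
    proof (rule bnorm)
      fix \<omega>
      have "cmod (iexp (t * W \<omega>) * (iexp ((y - t) * W \<omega>) - 1 - \<i> * ((y - t) * W \<omega>)))
          \<le> ((y - t) * W \<omega>)\<^sup>2 / 2"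
        using iexp_2[of "(y - t) * W \<omega>"] by (simp add: norm_mult del: of_real_mult)
      also have "\<dots> \<le> (B\<^sup>2 / 2) * (y - t)\<^sup>2"
      proof -
        have "(W \<omega>)\<^sup>2 \<le> B\<^sup>2" using bW[of \<omega>] B0 by (metis abs_le_square_iff abs_of_nonneg)
        then have "(W \<omega>)\<^sup>2 * (y - t)\<^sup>2 \<le> B\<^sup>2 * (y - t)\<^sup>2" by (intro mult_right_mono) auto
        then show ?thesis by (simp add: power_mult_distrib mult.commute)
      qed
      finally show "cmod (iexp (t * W \<omega>) * (iexp ((y - t) * W \<omega>) - 1 - \<i> * ((y - t) * W \<omega>)))
          \<le> (B\<^sup>2 / 2) * (y - t)\<^sup>2" .
    qed measurable
    finally show ?thesis .
  qed
  have "(f has_derivative (\<lambda>h. h *\<^sub>R f')) (at t)"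
    unfolding has_derivative_at_alt
  proof (intro conjI allI impI)
    show "bounded_linear (\<lambda>h. h *\<^sub>R f')" by (rule bounded_linear_scaleR_left)
    fix e :: real assume e: "e > 0"
    define d where "d = e / (B\<^sup>2 / 2 + 1)"
    have Bp: "B\<^sup>2 / 2 + 1 > 0" by (simp add: add_nonneg_pos)
    have d: "d > 0" unfolding d_def using e Bp by simp
    show "\<exists>d>0. \<forall>y. norm (y - t) < d \<longrightarrow> norm (f y - f t - (y - t) *\<^sub>R f') \<le> e * norm (y - t)"
    proof (intro exI[of _ d] conjI allI impI d)
      fix y assume y: "norm (y - t) < d"
      have "norm (f y - f t - (y - t) *\<^sub>R f') \<le> (B\<^sup>2 / 2) * (y - t)\<^sup>2" by (rule key)
      also have "\<dots> = ((B\<^sup>2 / 2) * \<bar>y - t\<bar>) * \<bar>y - t\<bar>" by (simp add: power2_eq_square abs_mult_self_eq)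
      also have "\<dots> \<le> e * \<bar>y - t\<bar>"
      proof (intro mult_right_mono)
        have "(B\<^sup>2 / 2) * \<bar>y - t\<bar> \<le> (B\<^sup>2 / 2 + 1) * d"
          using y by (intro mult_mono) auto
        also have "\<dots> = e" unfolding d_def using Bp by simp
        finally show "(B\<^sup>2 / 2) * \<bar>y - t\<bar> \<le> e" .
      qed simp
      finally show "norm (f y - f t - (y - t) *\<^sub>R f') \<le> e * norm (y - t)" by simp
    qed
  qed
  then show ?thesis unfolding has_vector_derivative_def f_def f'_def .
qed


lemma (in prob_space) core_char:
  fixes Y :: "'v \<Rightarrow> 'a \<Rightarrow> real" and S :: "'v set" and N N2 :: "'v \<Rightarrow> 'v set" and b D D2 t :: real
  assumes fin: "finite S"
    and [measurable]: "\<And>j. Y j \<in> borel_measurable M"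
    and bY: "\<And>j \<omega>. \<bar>Y j \<omega>\<bar> \<le> b"
    and sub: "\<And>i. i \<in> S \<Longrightarrow> N i \<subseteq> S" "\<And>i. i \<in> S \<Longrightarrow> N i \<subseteq> N2 i" "\<And>i. i \<in> S \<Longrightarrow> N2 i \<subseteq> S"
    and cN1: "\<And>i. i \<in> S \<Longrightarrow> real (card (N i)) \<le> D" and cN2: "\<And>i. i \<in> S \<Longrightarrow> real (card (N2 i)) \<le> D2"
    and ind1: "\<And>i t. i \<in> S \<Longrightarrow> (CLINT \<omega>|M. of_real (Y i \<omega>) * iexp (t * (\<Sum>j\<in>S-N i. Y j \<omega>))) = 0"
    and ind2: "\<And>i t. i \<in> S \<Longrightarrow> (CLINT \<omega>|M. of_real (Y i \<omega> * (\<Sum>j\<in>N i. Y j \<omega>)) * iexp (t * (\<Sum>j\<in>S-N2 i. Y j \<omega>)))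
       = of_real (LINT \<omega>|M. Y i \<omega> * (\<Sum>j\<in>N i. Y j \<omega>)) * (CLINT \<omega>|M. iexp (t * (\<Sum>j\<in>S-N2 i. Y j \<omega>)))"
    and var1: "(\<Sum>i\<in>S. LINT \<omega>|M. Y i \<omega> * (\<Sum>j\<in>N i. Y j \<omega>)) = 1"
    and D0: "D \<ge> 0" "D2 \<ge> 0"
  shows "cmod (char (distr M borel (\<lambda>\<omega>. \<Sum>j\<in>S. Y j \<omega>)) t - of_real (exp (- t\<^sup>2 / 2)))
     \<le> (real (card S) * (b^3 * (D\<^sup>2 / 2 + 2 * D * D2))) * \<bar>t\<bar> * (\<bar>t\<bar> + t\<^sup>2)"
proof -
  have b0: "b \<ge> 0" using bY[of undefined undefined] by simp
  define W where "W \<omega> = (\<Sum>j\<in>S. Y j \<omega>)" for \<omega>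
  have [measurable]: "W \<in> borel_measurable M" unfolding W_def by measurable
  have bW: "\<bar>W \<omega>\<bar> \<le> real (card S) * b" for \<omega> unfolding W_def by (rule abs_sum_le_card[OF bY])
  define \<phi> where "\<phi> t = (CLINT \<omega>|M. iexp (t * W \<omega>))" for t
  define \<phi>' where "\<phi>' t = (CLINT \<omega>|M. \<i> * W \<omega> * iexp (t * W \<omega>))" for t
  have d: "(\<phi> has_vector_derivative \<phi>' s) (at s)" for s
    unfolding \<phi>_def \<phi>'_def by (rule char_deriv[OF _ bW]) simp
  have \<phi>0: "\<phi> 0 = 1" unfolding \<phi>_def by (simp add: prob_space)
  define \<delta> where "\<delta> = real (card S) * (b^3 * (D\<^sup>2 / 2 + 2 * D * D2))"
  have \<delta>0: "\<delta> \<ge> 0" unfolding \<delta>_def using b0 D0 by simp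
  have e: "cmod (\<phi>' s + of_real s * \<phi> s) \<le> \<delta> * (\<bar>s\<bar> + s\<^sup>2)" for s
  proof -
    have "cmod (\<phi>' s + of_real s * \<phi> s) \<le> \<delta> * s\<^sup>2"
      using core[OF fin _ bY sub cN1 cN2 ind1 ind2 var1, of s]
      unfolding \<phi>_def \<phi>'_def W_def \<delta>_def by simp
    also have "\<dots> \<le> \<delta> * (\<bar>s\<bar> + s\<^sup>2)" using \<delta>0 by (intro mult_left_mono) auto
    finally show ?thesis .
  qed
  have "char (distr M borel W) t = \<phi> t" unfolding char_def \<phi>_def by (simp add: integral_distr)
  then show ?thesis using ode_bound[OF d \<phi>0 \<delta>0 e, of t] unfolding W_def \<delta>_def by simp
qed



lemma (in prob_space) indep_prod:
  fixes X :: "'v \<Rightarrow> 'a \<Rightarrow> real"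
    and F1 F2 :: "('v \<Rightarrow> real) \<Rightarrow> 'b::{real_normed_field, banach, second_countable_topology}"
  assumes ind: "indep_var (PiM V1 (\<lambda>_. borel)) (\<lambda>\<omega>. \<lambda>i\<in>V1. X i \<omega>) (PiM V2 (\<lambda>_. borel)) (\<lambda>\<omega>. \<lambda>j\<in>V2. X j \<omega>)"
    and m1: "F1 \<in> borel_measurable (PiM V1 (\<lambda>_. borel))"
    and m2: "F2 \<in> borel_measurable (PiM V2 (\<lambda>_. borel))"
    and b1: "\<And>x. norm (F1 x) \<le> Ca" and b2: "\<And>x. norm (F2 x) \<le> Cb"
  shows "(\<integral>\<omega>. F1 (\<lambda>i\<in>V1. X i \<omega>) * F2 (\<lambda>j\<in>V2. X j \<omega>) \<partial>M)
       = (\<integral>\<omega>. F1 (\<lambda>i\<in>V1. X i \<omega>) \<partial>M) * (\<integral>\<omega>. F2 (\<lambda>j\<in>V2. X j \<omega>) \<partial>M)"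
proof -
  have r1: "(\<lambda>\<omega>. \<lambda>i\<in>V1. X i \<omega>) \<in> measurable M (PiM V1 (\<lambda>_. borel))" using indep_var_rv1[OF ind] .
  have r2: "(\<lambda>\<omega>. \<lambda>i\<in>V2. X i \<omega>) \<in> measurable M (PiM V2 (\<lambda>_. borel))" using indep_var_rv2[OF ind] .
  have i: "indep_var borel (\<lambda>\<omega>. F1 (\<lambda>i\<in>V1. X i \<omega>)) borel (\<lambda>\<omega>. F2 (\<lambda>j\<in>V2. X j \<omega>))"
    using indep_var_compose[OF ind m1 m2] by (simp only: comp_def)
  have mm1: "(\<lambda>\<omega>. F1 (\<lambda>i\<in>V1. X i \<omega>)) \<in> borel_measurable M" using measurable_comp[OF r1 m1] by (simp only: comp_def)
  have mm2: "(\<lambda>\<omega>. F2 (\<lambda>i\<in>V2. X i \<omega>)) \<in> borel_measurable M" using measurable_comp[OF r2 m2] by (simp only: comp_def)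
  show ?thesis
  proof (rule indep_var_lebesgue_integral[OF i])
    have bb1: "norm (F1 (\<lambda>i\<in>V1. X i \<omega>)) \<le> Ca" for \<omega> by (rule b1)
    have bb2: "norm (F2 (\<lambda>i\<in>V2. X i \<omega>)) \<le> Cb" for \<omega> by (rule b2)
    show "integrable M (\<lambda>\<omega>. F1 (\<lambda>i\<in>V1. X i \<omega>))" by (rule bint[OF mm1 bb1])
    show "integrable M (\<lambda>\<omega>. F2 (\<lambda>i\<in>V2. X i \<omega>))" by (rule bint[OF mm2 bb2])
  qed
qed

lemma dep_indep:
  assumes "dependency_graph M V E X" "V1 \<subseteq> V" "V2 \<subseteq> V" "V1 \<inter> V2 = {}" "\<And>i j. i \<in> V1 \<Longrightarrow> j \<in> V2 \<Longrightarrow> \<not> E i j"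
  shows "prob_space.indep_var M (PiM V1 (\<lambda>_. borel)) (\<lambda>\<omega>. \<lambda>i\<in>V1. X i \<omega>) (PiM V2 (\<lambda>_. borel)) (\<lambda>\<omega>. \<lambda>j\<in>V2. X j \<omega>)"
proof -
  have "\<forall>V1 V2. V1 \<subseteq> V \<longrightarrow> V2 \<subseteq> V \<longrightarrow> V1 \<inter> V2 = {} \<longrightarrow>
        (\<forall>i\<in>V1. \<forall>j\<in>V2. \<not> E i j) \<longrightarrow>
        prob_space.indep_var M
          (PiM V1 (\<lambda>_. borel)) (\<lambda>\<omega>. \<lambda>i\<in>V1. X i \<omega>)
          (PiM V2 (\<lambda>_. borel)) (\<lambda>\<omega>. \<lambda>j\<in>V2. X j \<omega>)"
    using assms(1) unfolding dependency_graph_def by (elim conjE)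
  then show ?thesis using assms(2-5) by simp
qed

lemma meas_comp_sum:
  fixes g :: "'v \<Rightarrow> real \<Rightarrow> real"
  assumes "\<And>j. g j \<in> borel_measurable borel" "A \<subseteq> V"
  shows "(\<lambda>x. \<Sum>j\<in>A. g j (x j)) \<in> borel_measurable (PiM V (\<lambda>_. borel))"
proof (rule borel_measurable_sum)
  fix j assume "j \<in> A"
  then have "j \<in> V" using assms(2) by auto
  show "(\<lambda>x. g j (x j)) \<in> borel_measurable (PiM V (\<lambda>_. borel))"
    by (rule measurable_compose[OF measurable_component_singleton[OF \<open>j \<in> V\<close>] assms(1)])
qed

lemma abs_sum_le_on:
  fixes f :: "'v \<Rightarrow> real"
  assumes "\<And>j. j \<in> A \<Longrightarrow> \<bar>f j\<bar> \<le> b"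
  shows "\<bar>\<Sum>j\<in>A. f j\<bar> \<le> real (card A) * b"
proof -
  have "\<bar>\<Sum>j\<in>A. f j\<bar> \<le> (\<Sum>j\<in>A. \<bar>f j\<bar>)" by (rule sum_abs)
  also have "\<dots> \<le> real (card A) * b" using sum_bounded_above[of A "\<lambda>j. \<bar>f j\<bar>" b] assms by simp
  finally show ?thesis .
qed

lemma (in prob_space) per_n:
  fixes V S :: "'v set" and E :: "'v \<Rightarrow> 'v \<Rightarrow> bool" and X :: "'v \<Rightarrow> 'a \<Rightarrow> real"
    and c1 c2 \<sigma> t \<mu> :: real
  assumes \<mu>: "\<mu> = (1 / real (card S)) * (\<Sum>i\<in>S. expectation (X i))"
  assumes finV: "finite V" and dep: "dependency_graph M V E X" and SV: "S \<subseteq> V" and Sne: "S \<noteq> {}"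
    and c1: "0 < c1" and c2: "0 \<le> c2"
    and bnd: "\<And>i. i \<in> S \<Longrightarrow> prob {\<omega> \<in> space M. \<bar>X i \<omega> - \<mu>\<bar> > c1} = 0"
    and deg: "\<And>i. i \<in> S \<Longrightarrow> real (card {j \<in> S. E i j}) \<le> c2"
    and \<sigma>: "\<sigma> > 0" "\<sigma>\<^sup>2 = (real (card S))\<^sup>2 * variance (\<lambda>\<omega>. (1 / real (card S)) * (\<Sum>i\<in>S. X i \<omega>))"
  shows "cmod (char (distr M borel (\<lambda>\<omega>. \<Sum>j\<in>S. (max (\<mu> - c1) (min (\<mu> + c1) (X j \<omega>)) - expectation (X j)) / \<sigma>)) t
            - of_real (exp (- t\<^sup>2 / 2)))
     \<le> (real (card S) * ((2 * c1 / \<sigma>)^3 * ((c2 + 1)\<^sup>2 / 2 + 2 * (c2 + 1) * (c2 + 1)\<^sup>2))) * \<bar>t\<bar> * (\<bar>t\<bar> + t\<^sup>2)"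
proof -
  have finS: "finite S" using SV finV by (rule finite_subset)
  have cS: "real (card S) > 0" using finS Sne by (simp add: card_gt_0_iff)
  have measX: "X j \<in> borel_measurable M" if "j \<in> V" for j
    using dep that unfolding dependency_graph_def by blast
  have measXS: "X j \<in> borel_measurable M" if "j \<in> S" for j using measX that SV by blast
  have symE: "E i j \<Longrightarrow> E j i" for i j using dep unfolding dependency_graph_def simple_graph_def by blast
  define m where "m j = expectation (X j)" for j
  define g where "g j r = (max (\<mu> - c1) (min (\<mu> + c1) r) - m j) / \<sigma>" for j r
  define Y where "Y j \<omega> = (if j \<in> S then g j (X j \<omega>) else 0)" for j \<omega>
  have gm[measurable]: "g j \<in> borel_measurable borel" for j unfolding g_def by measurable
  have measY[measurable]: "Y j \<in> borel_measurable M" for j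
  proof (cases "j \<in> S")
    case True
    then show ?thesis unfolding Y_def using measurable_compose[OF measXS[OF True] gm] by simp
  next
    case False
    then have "Y j = (\<lambda>_. 0)" unfolding Y_def by (simp add: fun_eq_iff)
    then show ?thesis by simp
  qed
  have AEb: "AE \<omega> in M. \<bar>X j \<omega> - \<mu>\<bar> \<le> c1" if "j \<in> S" for j
  proof -
    have sets: "{\<omega> \<in> space M. \<bar>X j \<omega> - \<mu>\<bar> > c1} \<in> sets M"
      using measXS[OF that] by measurable
    have "{\<omega> \<in> space M. \<bar>X j \<omega> - \<mu>\<bar> > c1} \<in> null_sets M"
      using bnd[OF that] sets by (simp add: null_setsI emeasure_eq_measure)
    from AE_not_in[OF this] AE_space show ?thesis by eventually_elim auto
  qed
  have intX: "integrable M (X j)" if "j \<in> S" for j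
  proof (rule integrable_const_bound[where B="\<bar>\<mu>\<bar> + c1"])
    show "AE \<omega> in M. norm (X j \<omega>) \<le> \<bar>\<mu>\<bar> + c1" using AEb[OF that] by eventually_elim auto
  qed (rule measXS[OF that])
  have mb: "\<bar>m j - \<mu>\<bar> \<le> c1" if "j \<in> S" for j
  proof -
    have e: "expectation (\<lambda>\<omega>. X j \<omega> - \<mu>) = m j - \<mu>"
      unfolding m_def using intX[OF that] by (simp add: prob_space)
    have "expectation (\<lambda>\<omega>. X j \<omega> - \<mu>) \<le> expectation (\<lambda>\<omega>. c1)"
      using AEb[OF that] intX[OF that] by (intro integral_mono_AE) auto
    moreover have "expectation (\<lambda>\<omega>. - c1) \<le> expectation (\<lambda>\<omega>. X j \<omega> - \<mu>)"
      using AEb[OF that] intX[OF that] by (intro integral_mono_AE) auto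
    ultimately show ?thesis using e by (simp add: prob_space)
  qed
  define b where "b = 2 * c1 / \<sigma>"
  have b0: "b \<ge> 0" unfolding b_def using c1 \<sigma> by simp
  have gb: "\<bar>g j r\<bar> \<le> b" if "j \<in> S" for j r
  proof -
    have "\<bar>max (\<mu> - c1) (min (\<mu> + c1) r) - m j\<bar> \<le> 2 * c1" using mb[OF that] by (auto simp: max_def min_def)
    then show ?thesis unfolding g_def b_def abs_divide using \<sigma>(1) by (simp add: divide_right_mono)
  qed
  have bY: "\<bar>Y j \<omega>\<bar> \<le> b" for j \<omega> unfolding Y_def using gb b0 by auto
  have AEY: "AE \<omega> in M. Y j \<omega> = (X j \<omega> - m j) / \<sigma>" if "j \<in> S" for j
    using AEb[OF that] proof eventually_elim
    case (elim \<omega>)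
    then have "max (\<mu> - c1) (min (\<mu> + c1) (X j \<omega>)) = X j \<omega>" by (auto simp: max_def min_def)
    then show ?case unfolding Y_def g_def using that by simp
  qed
  have EY: "expectation (Y j) = 0" if "j \<in> S" for j
  proof -
    have "expectation (Y j) = expectation (\<lambda>\<omega>. (X j \<omega> - m j) / \<sigma>)"
      using AEY[OF that] measXS[OF that] by (intro integral_cong_AE) auto
    also have "\<dots> = 0" unfolding m_def using intX[OF that] by (simp add: prob_space)
    finally show ?thesis .
  qed
  define N where "N i = {j \<in> S. j = i \<or> E i j}" for i
  define N2 where "N2 i = (\<Union>k\<in>N i. N k)" for i
  have NS: "N i \<subseteq> S" for i unfolding N_def by auto
  have iN: "i \<in> N i" if "i \<in> S" for i unfolding N_def using that by auto
  have NN2: "N i \<subseteq> N2 i" if "i \<in> S" for i unfolding N2_def using iN NS by blast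
  have N2S: "N2 i \<subseteq> S" for i unfolding N2_def using NS by blast
  have finN: "finite (N i)" for i using NS finS by (rule finite_subset)
  have cN: "real (card (N i)) \<le> c2 + 1" if "i \<in> S" for i
  proof -
    have "N i = insert i {j \<in> S. E i j}" unfolding N_def using that by auto
    then have "card (N i) \<le> card {j \<in> S. E i j} + 1"
      using card_insert_le[of "{j \<in> S. E i j}" i] finS by (simp add: card_insert_if)
    then show ?thesis using deg[OF that] by linarith
  qed
  have cN2: "real (card (N2 i)) \<le> (c2 + 1)\<^sup>2" if "i \<in> S" for i
  proof -
    have "card (N2 i) \<le> (\<Sum>k\<in>N i. card (N k))" unfolding N2_def by (rule card_UN_le[OF finN])
    then have "real (card (N2 i)) \<le> (\<Sum>k\<in>N i. real (card (N k)))" by (simp flip: of_nat_sum)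
    also have "\<dots> \<le> real (card (N i)) * (c2 + 1)"
      using sum_bounded_above[of "N i" "\<lambda>k. real (card (N k))" "c2 + 1"] cN NS by blast
    also have "\<dots> \<le> (c2 + 1) * (c2 + 1)" using cN[OF that] c2 by (intro mult_right_mono) auto
    finally show ?thesis by (simp add: power2_eq_square)
  qed
  have Yg: "Y j \<omega> = g j (X j \<omega>)" if "j \<in> S" for j \<omega> unfolding Y_def using that by simp
  have YgF: "Y j = (\<lambda>\<omega>. g j (X j \<omega>))" if "j \<in> S" for j using Yg[OF that] by (simp add: fun_eq_iff)
  have gmeasPi: "(\<lambda>x. g j (x j)) \<in> borel_measurable (PiM A (\<lambda>_. borel))" if "j \<in> A" for j A
    by (rule measurable_compose[OF measurable_component_singleton[OF that] gm])
  have orth: "expectation (\<lambda>\<omega>. Y i \<omega> * Y j \<omega>) = 0" if "i \<in> S" "j \<in> S - N i" for i j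
  proof -
    have ij: "j \<noteq> i" "\<not> E i j" using that unfolding N_def by auto
    have ind: "indep_var (PiM {i} (\<lambda>_. borel)) (\<lambda>\<omega>. \<lambda>k\<in>{i}. X k \<omega>) (PiM {j} (\<lambda>_. borel)) (\<lambda>\<omega>. \<lambda>k\<in>{j}. X k \<omega>)"
      using dep_indep[OF dep, of "{i}" "{j}"] that SV ij by auto
    have "expectation (\<lambda>\<omega>. (\<lambda>x. g i (x i)) (\<lambda>k\<in>{i}. X k \<omega>) * (\<lambda>x. g j (x j)) (\<lambda>k\<in>{j}. X k \<omega>))
        = expectation (\<lambda>\<omega>. (\<lambda>x. g i (x i)) (\<lambda>k\<in>{i}. X k \<omega>)) * expectation (\<lambda>\<omega>. (\<lambda>x. g j (x j)) (\<lambda>k\<in>{j}. X k \<omega>))"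
      by (rule indep_prod[OF ind gmeasPi gmeasPi, where Ca=b and Cb=b]) (use gb that in auto)
    then show ?thesis using EY[of i] EY[of j] that by (simp add: YgF)
  qed
  have sumYg: "(\<Sum>j\<in>A. Y j \<omega>) = (\<Sum>j\<in>A. g j (X j \<omega>))" if "A \<subseteq> S" for A \<omega>
    using that by (intro sum.cong) (auto simp: Yg)
  have sumR: "(\<Sum>j\<in>A. g j ((\<lambda>k\<in>A. X k \<omega>) j)) = (\<Sum>j\<in>A. g j (X j \<omega>))" for A \<omega>
    by (intro sum.cong) auto
  have sumPi: "(\<lambda>x. \<Sum>j\<in>A. g j (x j)) \<in> borel_measurable (PiM A (\<lambda>_. borel))" for A
    by (rule meas_comp_sum[OF gm]) simp
  have ind1: "(CLINT \<omega>|M. of_real (Y i \<omega>) * iexp (t' * (\<Sum>j\<in>S-N i. Y j \<omega>))) = 0" if "i \<in> S" for i t'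
  proof -
    have ind: "indep_var (PiM {i} (\<lambda>_. borel)) (\<lambda>\<omega>. \<lambda>k\<in>{i}. X k \<omega>) (PiM (S - N i) (\<lambda>_. borel)) (\<lambda>\<omega>. \<lambda>k\<in>S - N i. X k \<omega>)"
      by (rule dep_indep[OF dep]) (use that SV iN[OF that] in \<open>auto simp: N_def\<close>)
    define F1 where "F1 x = complex_of_real (g i (x i))" for x :: "'v \<Rightarrow> real"
    define F2 where "F2 x = iexp (t' * (\<Sum>j\<in>S - N i. g j (x j)))" for x :: "'v \<Rightarrow> real"
    have m1: "F1 \<in> borel_measurable (PiM {i} (\<lambda>_. borel))"
    proof -
      have [measurable]: "(\<lambda>x. g i (x i)) \<in> borel_measurable (PiM {i} (\<lambda>_. borel))" by (rule gmeasPi) simp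
      show ?thesis unfolding F1_def by measurable
    qed
    have m2: "F2 \<in> borel_measurable (PiM (S - N i) (\<lambda>_. borel))"
    proof -
      have [measurable]: "(\<lambda>x. \<Sum>j\<in>S - N i. g j (x j)) \<in> borel_measurable (PiM (S - N i) (\<lambda>_. borel))" by (rule sumPi)
      show ?thesis unfolding F2_def by measurable
    qed
    have "(CLINT \<omega>|M. F1 (\<lambda>k\<in>{i}. X k \<omega>) * F2 (\<lambda>k\<in>S - N i. X k \<omega>))
        = (CLINT \<omega>|M. F1 (\<lambda>k\<in>{i}. X k \<omega>)) * (CLINT \<omega>|M. F2 (\<lambda>k\<in>S - N i. X k \<omega>))"
      by (rule indep_prod[OF ind m1 m2, where Ca=b and Cb=1]) (use gb that in \<open>auto simp: F1_def F2_def\<close>)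
    moreover have "(CLINT \<omega>|M. F1 (\<lambda>k\<in>{i}. X k \<omega>)) = 0"
      unfolding F1_def using EY[OF that] by (simp add: YgF[OF that])
    moreover have "(CLINT \<omega>|M. of_real (Y i \<omega>) * iexp (t' * (\<Sum>j\<in>S-N i. Y j \<omega>)))
        = (CLINT \<omega>|M. F1 (\<lambda>k\<in>{i}. X k \<omega>) * F2 (\<lambda>k\<in>S - N i. X k \<omega>))"
      unfolding F1_def F2_def sumR using that by (simp add: sumYg Yg)
    ultimately show ?thesis by simp
  qed
  have ind2: "(CLINT \<omega>|M. of_real (Y i \<omega> * (\<Sum>j\<in>N i. Y j \<omega>)) * iexp (t' * (\<Sum>j\<in>S-N2 i. Y j \<omega>)))
       = of_real (LINT \<omega>|M. Y i \<omega> * (\<Sum>j\<in>N i. Y j \<omega>)) * (CLINT \<omega>|M. iexp (t' * (\<Sum>j\<in>S-N2 i. Y j \<omega>)))"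
    if "i \<in> S" for i t'
  proof -
    have noedge: "\<not> E k j" if "k \<in> N i" "j \<in> S - N2 i" for k j
    proof
      assume "E k j"
      then have "j \<in> N k" using that unfolding N_def by auto
      then show False using that unfolding N2_def by auto
    qed
    have ind: "indep_var (PiM (N i) (\<lambda>_. borel)) (\<lambda>\<omega>. \<lambda>k\<in>N i. X k \<omega>) (PiM (S - N2 i) (\<lambda>_. borel)) (\<lambda>\<omega>. \<lambda>k\<in>S - N2 i. X k \<omega>)"
      by (rule dep_indep[OF dep]) (use that SV NS NN2[OF that] noedge in auto)
    define F1 where "F1 x = complex_of_real (g i (x i) * (\<Sum>j\<in>N i. g j (x j)))" for x :: "'v \<Rightarrow> real"
    define F2 where "F2 x = iexp (t' * (\<Sum>j\<in>S - N2 i. g j (x j)))" for x :: "'v \<Rightarrow> real"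
    have m1: "F1 \<in> borel_measurable (PiM (N i) (\<lambda>_. borel))"
    proof -
      have [measurable]: "(\<lambda>x. g i (x i)) \<in> borel_measurable (PiM (N i) (\<lambda>_. borel))" by (rule gmeasPi) (rule iN[OF that])
      have [measurable]: "(\<lambda>x. \<Sum>j\<in>N i. g j (x j)) \<in> borel_measurable (PiM (N i) (\<lambda>_. borel))" by (rule sumPi)
      show ?thesis unfolding F1_def by measurable
    qed
    have m2: "F2 \<in> borel_measurable (PiM (S - N2 i) (\<lambda>_. borel))"
    proof -
      have [measurable]: "(\<lambda>x. \<Sum>j\<in>S - N2 i. g j (x j)) \<in> borel_measurable (PiM (S - N2 i) (\<lambda>_. borel))" by (rule sumPi)
      show ?thesis unfolding F2_def by measurable
    qed
    have bF1: "norm (F1 x) \<le> b * (real (card (N i)) * b)" for x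
    proof -
      have "\<bar>\<Sum>j\<in>N i. g j (x j)\<bar> \<le> real (card (N i)) * b" by (rule abs_sum_le_on) (use gb NS in blast)
      then show ?thesis unfolding F1_def norm_of_real abs_mult using gb[OF that] b0
        by (intro mult_mono) auto
    qed
    have e: "g i (X i \<omega>) * (\<Sum>j\<in>N i. g j (X j \<omega>)) = Y i \<omega> * (\<Sum>j\<in>N i. Y j \<omega>)" for \<omega>
      using that iN[OF that] NS by (simp add: sumYg Yg)
    have ri: "(\<lambda>k\<in>N i. X k \<omega>) i = X i \<omega>" for \<omega> using iN[OF that] by simp
    have e2: "(\<Sum>j\<in>S - N2 i. g j (X j \<omega>)) = (\<Sum>j\<in>S-N2 i. Y j \<omega>)" for \<omega>
      by (simp add: sumYg)
    have "(CLINT \<omega>|M. F1 (\<lambda>k\<in>N i. X k \<omega>) * F2 (\<lambda>k\<in>S - N2 i. X k \<omega>))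
        = (CLINT \<omega>|M. F1 (\<lambda>k\<in>N i. X k \<omega>)) * (CLINT \<omega>|M. F2 (\<lambda>k\<in>S - N2 i. X k \<omega>))"
      by (rule indep_prod[OF ind m1 m2 bF1, where Cb=1]) (simp add: F2_def)
    moreover have "(CLINT \<omega>|M. F1 (\<lambda>k\<in>N i. X k \<omega>)) = of_real (LINT \<omega>|M. Y i \<omega> * (\<Sum>j\<in>N i. Y j \<omega>))"
      unfolding F1_def sumR ri e by (rule integral_complex_of_real)
    moreover have "(CLINT \<omega>|M. F2 (\<lambda>k\<in>S - N2 i. X k \<omega>)) = (CLINT \<omega>|M. iexp (t' * (\<Sum>j\<in>S-N2 i. Y j \<omega>)))"
      unfolding F2_def sumR e2 ..
    moreover have "(CLINT \<omega>|M. of_real (Y i \<omega> * (\<Sum>j\<in>N i. Y j \<omega>)) * iexp (t' * (\<Sum>j\<in>S-N2 i. Y j \<omega>)))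
        = (CLINT \<omega>|M. F1 (\<lambda>k\<in>N i. X k \<omega>) * F2 (\<lambda>k\<in>S - N2 i. X k \<omega>))"
      unfolding F1_def F2_def sumR ri e e2 ..
    ultimately show ?thesis by simp
  qed
  define Xb where "Xb \<omega> = (1 / real (card S)) * (\<Sum>i\<in>S. X i \<omega>)" for \<omega>
  have measXb[measurable]: "Xb \<in> borel_measurable M" unfolding Xb_def using measXS by measurable
  have EXb: "expectation Xb = \<mu>"
  proof -
    have "expectation Xb = (1 / real (card S)) * (\<Sum>i\<in>S. expectation (X i))"
      unfolding Xb_def by (subst integral_mult_right_zero, subst Bochner_Integration.integral_sum) (use intX in auto)
    then show ?thesis using \<mu> by simp
  qed
  have sum_m: "(\<Sum>j\<in>S. m j) = real (card S) * \<mu>" unfolding \<mu> m_def using cS by simp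
  have AEall: "AE \<omega> in M. \<forall>j\<in>S. Y j \<omega> = (X j \<omega> - m j) / \<sigma>"
    by (rule AE_finite_allI[OF finS]) (rule AEY)
  have AEW: "AE \<omega> in M. (\<Sum>j\<in>S. Y j \<omega>)\<^sup>2 = (real (card S) / \<sigma>)\<^sup>2 * (Xb \<omega> - \<mu>)\<^sup>2"
    using AEall proof eventually_elim
    case (elim \<omega>)
    then have "(\<Sum>j\<in>S. Y j \<omega>) = (\<Sum>j\<in>S. (X j \<omega> - m j) / \<sigma>)" by (intro sum.cong) auto
    also have "\<dots> = ((\<Sum>j\<in>S. X j \<omega>) - (\<Sum>j\<in>S. m j)) / \<sigma>"
      by (simp add: sum_divide_distrib[symmetric] sum_subtractf)
    also have "\<dots> = real (card S) / \<sigma> * (Xb \<omega> - \<mu>)"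
      unfolding sum_m Xb_def using cS \<sigma>(1) by (simp add: field_simps)
    finally show ?case by (simp add: power_mult_distrib power_divide)
  qed
  have EW2: "expectation (\<lambda>\<omega>. (\<Sum>j\<in>S. Y j \<omega>)\<^sup>2) = 1"
  proof -
    have "expectation (\<lambda>\<omega>. (\<Sum>j\<in>S. Y j \<omega>)\<^sup>2) = expectation (\<lambda>\<omega>. (real (card S) / \<sigma>)\<^sup>2 * (Xb \<omega> - \<mu>)\<^sup>2)"
      using AEW by (intro integral_cong_AE) auto
    also have "\<dots> = (real (card S) / \<sigma>)\<^sup>2 * variance Xb" by (simp add: EXb)
    also have "\<dots> = 1"
    proof -
      have s2: "\<sigma>\<^sup>2 = (real (card S))\<^sup>2 * variance Xb" using \<sigma>(2) unfolding Xb_def .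
      have "\<sigma>\<^sup>2 > 0" using \<sigma>(1) by simp
      then have v0: "variance Xb \<noteq> 0" using s2 by auto
      have c0: "(real (card S))\<^sup>2 \<noteq> 0" using cS by simp
      show ?thesis unfolding power_divide s2 using v0 c0 by simp
    qed
    finally show ?thesis .
  qed
  have intYs: "integrable M (\<lambda>\<omega>. Y i \<omega> * (\<Sum>j\<in>A. Y j \<omega>))" for i A
  proof (rule bint[where C="b * (real (card A) * b)"])
    fix \<omega>
    have "\<bar>\<Sum>j\<in>A. Y j \<omega>\<bar> \<le> real (card A) * b" by (rule abs_sum_le_card[OF bY])
    then show "norm (Y i \<omega> * (\<Sum>j\<in>A. Y j \<omega>)) \<le> b * (real (card A) * b)"
      unfolding real_norm_def abs_mult using bY[of i \<omega>] b0 by (intro mult_mono) auto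
  qed simp
  have intYY: "integrable M (\<lambda>\<omega>. Y i \<omega> * Y j \<omega>)" for i j
    by (rule bint[where C="b * b"]) (use bY b0 in \<open>auto simp: abs_mult intro!: mult_mono\<close>)
  have var1: "(\<Sum>i\<in>S. LINT \<omega>|M. Y i \<omega> * (\<Sum>j\<in>N i. Y j \<omega>)) = 1"
  proof -
    have "1 = expectation (\<lambda>\<omega>. \<Sum>i\<in>S. Y i \<omega> * (\<Sum>j\<in>S. Y j \<omega>))"
      unfolding EW2[symmetric] by (simp add: power2_eq_square sum_distrib_right)
    also have "\<dots> = (\<Sum>i\<in>S. expectation (\<lambda>\<omega>. Y i \<omega> * (\<Sum>j\<in>S. Y j \<omega>)))"
      by (rule Bochner_Integration.integral_sum) (rule intYs)
    also have "\<dots> = (\<Sum>i\<in>S. LINT \<omega>|M. Y i \<omega> * (\<Sum>j\<in>N i. Y j \<omega>))"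
    proof (rule sum.cong[OF refl])
      fix i assume i: "i \<in> S"
      have split: "(\<Sum>j\<in>S. Y j \<omega>) = (\<Sum>j\<in>S - N i. Y j \<omega>) + (\<Sum>j\<in>N i. Y j \<omega>)" for \<omega>
        using sum.subset_diff[OF NS finS] by simp
      have z: "expectation (\<lambda>\<omega>. Y i \<omega> * (\<Sum>j\<in>S - N i. Y j \<omega>)) = 0"
      proof -
        have "expectation (\<lambda>\<omega>. Y i \<omega> * (\<Sum>j\<in>S - N i. Y j \<omega>)) = expectation (\<lambda>\<omega>. \<Sum>j\<in>S - N i. Y i \<omega> * Y j \<omega>)"
          by (simp add: sum_distrib_left)
        also have "\<dots> = (\<Sum>j\<in>S - N i. expectation (\<lambda>\<omega>. Y i \<omega> * Y j \<omega>))"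
          by (rule Bochner_Integration.integral_sum) (rule intYY)
        also have "\<dots> = 0" using orth[OF i] by simp
        finally show ?thesis .
      qed
      show "expectation (\<lambda>\<omega>. Y i \<omega> * (\<Sum>j\<in>S. Y j \<omega>)) = (LINT \<omega>|M. Y i \<omega> * (\<Sum>j\<in>N i. Y j \<omega>))"
        unfolding split distrib_left using z intYs by (simp add: Bochner_Integration.integral_add)
    qed
    finally show ?thesis by simp
  qed
  have D0: "c2 + 1 \<ge> 0" "(c2 + 1)\<^sup>2 \<ge> 0" using c2 by auto
  have main: "cmod (char (distr M borel (\<lambda>\<omega>. \<Sum>j\<in>S. Y j \<omega>)) t - of_real (exp (- t\<^sup>2 / 2)))
     \<le> (real (card S) * (b^3 * ((c2 + 1)\<^sup>2 / 2 + 2 * (c2 + 1) * (c2 + 1)\<^sup>2))) * \<bar>t\<bar> * (\<bar>t\<bar> + t\<^sup>2)"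
    by (rule core_char[OF finS measY bY NS NN2 N2S cN cN2 ind1 ind2 var1 D0])
  have "(\<lambda>\<omega>. \<Sum>j\<in>S. Y j \<omega>) = (\<lambda>\<omega>. \<Sum>j\<in>S. (max (\<mu> - c1) (min (\<mu> + c1) (X j \<omega>)) - expectation (X j)) / \<sigma>)"
    by (intro ext sum.cong) (auto simp: Y_def g_def m_def)
  then show ?thesis using main unfolding b_def by simp
qed



lemma rd_std: "real_distribution std_normal"
  unfolding std_normal_def by (rule real_dist_normal_dist)

lemma std_singleton: "measure std_normal {x} = 0"
proof -
  have "emeasure std_normal {x} = (\<integral>\<^sup>+ y. ennreal (std_normal_density y) * indicator {x} y \<partial>lborel)"
    unfolding std_normal_def by (rule emeasure_density) simp_all
  also have "\<dots> = (\<integral>\<^sup>+ y. ennreal (std_normal_density x) * indicator {x} y \<partial>lborel)"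
    by (rule nn_integral_cong) (simp split: split_indicator)
  also have "\<dots> = 0" by (simp add: nn_integral_cmult_indicator)
  finally show ?thesis by (simp add: measure_def)
qed

lemma std_cont: "isCont std_normal_cdf x"
proof -
  interpret real_distribution std_normal by (rule rd_std)
  show ?thesis unfolding std_normal_cdf_def[abs_def]
    using isCont_cdf std_singleton by simp
qed

lemma std_distr_uminus: "distr std_normal borel uminus = std_normal"
proof -
  have "distr std_normal borel uminus = distr (density lborel (\<lambda>x. std_normal_density (- x))) borel uminus"
    unfolding std_normal_def std_normal_density_def by simp
  also have "\<dots> = density (distr lborel borel uminus) std_normal_density"
    by (subst density_distr) auto
  also have "\<dots> = std_normal" unfolding lborel_distr_uminus std_normal_def ..
  finally show ?thesis .
qed

lemma std_sym: "std_normal_cdf (- x) = 1 - std_normal_cdf x"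
proof -
  interpret real_distribution std_normal by (rule rd_std)
  have "std_normal_cdf (- x) = measure std_normal {..-x}"
    unfolding std_normal_cdf_def cdf_def ..
  also have "\<dots> = measure (distr std_normal borel uminus) {x..}"
    by (subst measure_distr) (auto intro!: arg_cong[where f="measure std_normal"])
  also have "\<dots> = measure std_normal {x..}" by (simp add: std_distr_uminus)
  also have "\<dots> = 1 - measure std_normal {..<x}"
  proof -
    have U: "{x..} \<union> {..<x} = (UNIV::real set)" by auto
    have "measure std_normal {x..} + measure std_normal {..<x} = 1"
      using finite_measure_Union[of "{x..}" "{..<x}"] prob_space
      using U by (simp add: disjoint_iff)
    then show ?thesis by simp
  qed
  also have "measure std_normal {..<x} = measure std_normal {..x}"
  proof -
    have "measure std_normal {..x} = measure std_normal {..<x} + measure std_normal {x}"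
      using finite_measure_Union[of "{..<x}" "{x}"] by (simp add: ivl_disj_un(2)[symmetric] Un_commute)
    then show ?thesis using std_singleton by simp
  qed
  finally show ?thesis unfolding std_normal_cdf_def cdf_def by simp
qed

lemma std_strict_mono:
  assumes "x < y" shows "std_normal_cdf x < std_normal_cdf y"
proof -
  interpret real_distribution std_normal by (rule rd_std)
  define m where "m = max \<bar>x\<bar> \<bar>y\<bar>"
  define c where "c = std_normal_density m"
  have c: "c > 0" unfolding c_def std_normal_density_def by simp
  have le: "c \<le> std_normal_density z" if "z \<in> {x<..y}" for z
  proof -
    have "\<bar>z\<bar> \<le> \<bar>m\<bar>" using that unfolding m_def by auto
    then have "z\<^sup>2 \<le> m\<^sup>2" by (simp add: abs_le_square_iff)
    then show ?thesis unfolding c_def std_normal_density_def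
      by (intro mult_left_mono) auto
  qed
  have "emeasure std_normal {x<..y} = (\<integral>\<^sup>+ z. ennreal (std_normal_density z) * indicator {x<..y} z \<partial>lborel)"
    unfolding std_normal_def by (subst emeasure_density) auto
  also have "\<dots> \<ge> (\<integral>\<^sup>+ z. ennreal c * indicator {x<..y} z \<partial>lborel)"
    by (intro nn_integral_mono) (auto simp: indicator_def le)
  moreover have "(\<integral>\<^sup>+ z. ennreal c * indicator {x<..y} z \<partial>lborel) = ennreal (c * (y - x))"
    using assms c by (simp add: nn_integral_cmult_indicator ennreal_mult)
  ultimately have "emeasure std_normal {x<..y} \<ge> ennreal (c * (y - x))" by simp
  moreover have "c * (y - x) > 0" using c assms by simp
  ultimately have "measure std_normal {x<..y} > 0"
    using emeasure_eq_measure[of "{x<..y}"] by (metis ennreal_le_iff less_le_trans measure_nonneg)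
  then show ?thesis using cdf_diff_eq[OF assms] unfolding std_normal_cdf_def by simp
qed

lemma std_quantile:
  assumes "0 < p" "p < 1"
  shows "std_normal_cdf (std_normal_quantile p) = p"
proof -
  interpret real_distribution std_normal by (rule rd_std)
  have "eventually (\<lambda>x. cdf std_normal x < p) at_bot"
    using order_tendstoD(2)[OF cdf_lim_at_bot assms(1)] .
  then obtain a where a: "cdf std_normal a < p" by (auto simp: eventually_at_bot_linorder)
  have "eventually (\<lambda>x. cdf std_normal x > p) at_top"
    using order_tendstoD(1)[OF cdf_lim_at_top_prob assms(2)] .
  then obtain b0 where b0: "\<And>x. x \<ge> b0 \<Longrightarrow> cdf std_normal x > p" by (auto simp: eventually_at_top_linorder)
  define b where "b = max a b0"
  have b: "cdf std_normal b > p" "a \<le> b" using b0 unfolding b_def by auto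
  obtain z where z: "std_normal_cdf z = p"
    using IVT[of std_normal_cdf a p b] a b std_cont unfolding std_normal_cdf_def[symmetric]
    by (auto simp: std_normal_cdf_def)
  have "\<exists>!z. std_normal_cdf z = p"
  proof (rule ex1I[of _ z])
    fix w assume "std_normal_cdf w = p"
    then show "w = z" using z std_strict_mono by (metis linorder_neqE_linordered_idom less_irrefl)
  qed (rule z)
  then show ?thesis unfolding std_normal_quantile_def by (rule theI')
qed



lemma delta_lim:
  fixes v :: "nat \<Rightarrow> real" and c1 c3 K :: real
  assumes v: "v \<longlonglongrightarrow> c3" and c3: "c3 > 0"
  shows "(\<lambda>n. real n * ((2 * c1 / sqrt (real n * v n))^3 * K)) \<longlonglongrightarrow> 0"
proof -
  have ev: "eventually (\<lambda>n. v n > 0 \<and> n \<ge> 1) sequentially"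
    using order_tendstoD(1)[OF v c3] eventually_ge_at_top[of 1] by eventually_elim auto
  have nv: "filterlim (\<lambda>n. v n * real n) at_top sequentially"
    by (rule filterlim_tendsto_pos_mult_at_top[OF v c3 filterlim_real_sequentially])
  have sq: "filterlim (\<lambda>n. sqrt (v n * real n)) at_top sequentially"
    by (rule filterlim_compose[OF sqrt_at_top nv])
  have g: "filterlim (\<lambda>n. v n * sqrt (real n * v n)) at_top sequentially"
    using filterlim_tendsto_pos_mult_at_top[OF v c3 sq] by (simp add: mult.commute)
  have lim: "(\<lambda>n. 8 * c1^3 * K / (v n * sqrt (real n * v n))) \<longlonglongrightarrow> 0"
    by (rule tendsto_divide_0[OF tendsto_const filterlim_at_top_imp_at_infinity[OF g]])
  have "eventually (\<lambda>n. 8 * c1^3 * K / (v n * sqrt (real n * v n)) = real n * ((2 * c1 / sqrt (real n * v n))^3 * K)) sequentially"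
    using ev proof eventually_elim
    case (elim n)
    define s where "s = sqrt (real n * v n)"
    have s: "s > 0" "s^3 = real n * v n * s" using elim unfolding s_def
      by (auto simp: power3_eq_cube)
    show ?case unfolding s_def[symmetric] using s elim
      by (simp add: power_divide field_simps power3_eq_cube)
  qed
  from Lim_transform_eventually[OF lim this] show ?thesis .
qed

theorem proposition3:
  fixes M :: "nat \<Rightarrow> 'a measure"
    and V S :: "nat \<Rightarrow> 'v set"
    and E :: "nat \<Rightarrow> 'v \<Rightarrow> 'v \<Rightarrow> bool"
    and X :: "nat \<Rightarrow> 'v \<Rightarrow> 'a \<Rightarrow> real"
    and Vhat :: "nat \<Rightarrow> 'a \<Rightarrow> real"
    and c1 c2 c3 \<alpha> :: real
  defines "\<mu> \<equiv> (\<lambda>n. (1 / real n) * (\<Sum>i\<in>S n. prob_space.expectation (M n) (X n i)))"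
    and "Xbar \<equiv> (\<lambda>n \<omega>. (1 / real n) * (\<Sum>i\<in>S n. X n i \<omega>))"
  assumes prob: "\<And>n. prob_space (M n)"
    and finV: "\<And>n. finite (V n)"
    and dep: "\<And>n. dependency_graph (M n) (V n) (E n) (X n)"
    and S_sub: "\<And>n. S n \<subseteq> V n"
    and card_S: "\<And>n. card (S n) = n"
    and nested_V: "\<And>n. V n \<subseteq> V (Suc n)"
    and nested_S: "\<And>n. S n \<subseteq> S (Suc n)"
    and nested_E: "\<And>n i j. i \<in> V n \<Longrightarrow> j \<in> V n \<Longrightarrow> E (Suc n) i j = E n i j"
    and c_pos: "0 < c1" "0 < c2" "0 < c3"
    and bounded: "\<And>n i. i \<in> S n \<Longrightarrow>
        prob_space.prob (M n) {\<omega> \<in> space (M n). \<bar>X n i \<omega> - \<mu> n\<bar> > c1} = 0"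
    and degree: "\<And>n i. i \<in> S n \<Longrightarrow> real (card {j \<in> S n. E n i j}) \<le> c2"
    and var_lim: "(\<lambda>n. real n * prob_space.variance (M n) (Xbar n)) \<longlonglongrightarrow> c3"
    and Vhat_meas: "\<And>n. Vhat n \<in> borel_measurable (M n)"
    and Vhat_cons: "\<And>\<epsilon>. \<epsilon> > 0 \<Longrightarrow>
        (\<lambda>n. prob_space.prob (M n) {\<omega> \<in> space (M n).
           real n * prob_space.variance (M n) (Xbar n) - real n * Vhat n \<omega> > \<epsilon>}) \<longlonglongrightarrow> 0"
    and alpha: "0 < \<alpha>" "\<alpha> < 1"
  shows "liminf (\<lambda>n. ereal (prob_space.prob (M n) {\<omega> \<in> space (M n).
            \<bar>Xbar n \<omega> - \<mu> n\<bar> \<le> std_normal_quantile (1 - \<alpha> / 2) * sqrt (Vhat n \<omega>)}))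
         \<ge> ereal (1 - \<alpha>)"
proof -
  define v where "v n = real n * prob_space.variance (M n) (Xbar n)" for n
  define \<sigma> where "\<sigma> n = sqrt (real n * v n)" for n
  define W where "W n \<omega> = (\<Sum>j\<in>S n. (max (\<mu> n - c1) (min (\<mu> n + c1) (X n j \<omega>)) - prob_space.expectation (M n) (X n j)) / \<sigma> n)" for n \<omega>
  define K where "K = (c2 + 1)\<^sup>2 / 2 + 2 * (c2 + 1) * (c2 + 1)\<^sup>2"
  have vlim: "v \<longlonglongrightarrow> c3" using var_lim unfolding v_def .
  have evn: "eventually (\<lambda>n. n \<ge> 1 \<and> v n > c3 / 2) sequentially"
  proof -
    have "c3 / 2 < c3" using c_pos by simp
    from order_tendstoD(1)[OF vlim this] eventually_ge_at_top[of 1]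
    show ?thesis by eventually_elim auto
  qed
  have measX: "X n j \<in> borel_measurable (M n)" if "j \<in> V n" for n j
    using dep[of n] that unfolding dependency_graph_def by blast
  have measW: "W n \<in> borel_measurable (M n)" for n
    unfolding W_def
  proof (rule borel_measurable_sum)
    fix j assume "j \<in> S n"
    then have [measurable]: "X n j \<in> borel_measurable (M n)" using measX S_sub by blast
    show "(\<lambda>\<omega>. (max (\<mu> n - c1) (min (\<mu> n + c1) (X n j \<omega>)) - prob_space.expectation (M n) (X n j)) / \<sigma> n) \<in> borel_measurable (M n)"
      by measurable
  qed
  have rdW: "real_distribution (distr (M n) borel (W n))" for n
    using prob_space.real_distribution_distr[OF prob measW] .
  have charb: "cmod (char (distr (M n) borel (W n)) t - of_real (exp (- t\<^sup>2 / 2)))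
      \<le> (real n * ((2 * c1 / \<sigma> n)^3 * K)) * \<bar>t\<bar> * (\<bar>t\<bar> + t\<^sup>2)"
    if n: "n \<ge> 1" "v n > c3 / 2" for n t
  proof -
    have Sne: "S n \<noteq> {}" using card_S[of n] n by auto
    have vpos: "v n > 0" using n c_pos by linarith
    have \<sigma>pos: "\<sigma> n > 0" unfolding \<sigma>_def using vpos n by simp
    have \<sigma>sq: "(\<sigma> n)\<^sup>2 = (real (card (S n)))\<^sup>2 * prob_space.variance (M n) (\<lambda>\<omega>. (1 / real (card (S n))) * (\<Sum>i\<in>S n. X n i \<omega>))"
      unfolding \<sigma>_def card_S using vpos n unfolding v_def Xbar_def by (simp add: power2_eq_square)
    have \<mu>n: "\<mu> n = (1 / real (card (S n))) * (\<Sum>i\<in>S n. prob_space.expectation (M n) (X n i))"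
      unfolding \<mu>_def card_S ..
    show ?thesis
      using prob_space.per_n[OF prob \<mu>n finV dep S_sub Sne c_pos(1) _ bounded degree \<sigma>pos \<sigma>sq, of t] c_pos
      unfolding W_def[abs_def] K_def card_S by simp
  qed
  have dlim: "(\<lambda>n. real n * ((2 * c1 / \<sigma> n)^3 * K)) \<longlonglongrightarrow> 0"
    unfolding \<sigma>_def by (rule delta_lim[OF vlim c_pos(3)])
  have charconv: "(\<lambda>n. char (distr (M n) borel (W n)) t) \<longlonglongrightarrow> char std_normal t" for t
  proof -
    have "((\<lambda>n. char (distr (M n) borel (W n)) t - of_real (exp (- t\<^sup>2 / 2))) \<longlonglongrightarrow> 0)"
    proof (rule Lim_null_comparison)
      show "eventually (\<lambda>n. norm (char (distr (M n) borel (W n)) t - of_real (exp (- t\<^sup>2 / 2)))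
          \<le> (real n * ((2 * c1 / \<sigma> n)^3 * K)) * \<bar>t\<bar> * (\<bar>t\<bar> + t\<^sup>2)) sequentially"
        using evn by eventually_elim (use charb in auto)
      show "(\<lambda>n. (real n * ((2 * c1 / \<sigma> n)^3 * K)) * \<bar>t\<bar> * (\<bar>t\<bar> + t\<^sup>2)) \<longlonglongrightarrow> 0"
        by (rule tendsto_mult_left_zero[OF tendsto_mult_left_zero[OF dlim]])
    qed
    then have "(\<lambda>n. char (distr (M n) borel (W n)) t) \<longlonglongrightarrow> of_real (exp (- t\<^sup>2 / 2))"
      by (rule LIM_zero_cancel)
    then show ?thesis unfolding std_normal_def char_std_normal_distribution by simp
  qed
  have wc: "weak_conv_m (\<lambda>n. distr (M n) borel (W n)) std_normal"
    by (rule levy_continuity[OF rdW rd_std charconv])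
  have cdfconv: "(\<lambda>n. prob_space.prob (M n) {\<omega> \<in> space (M n). W n \<omega> \<le> x}) \<longlonglongrightarrow> std_normal_cdf x" for x
  proof -
    have ic: "isCont (cdf std_normal) x" using std_cont[of x] unfolding std_normal_cdf_def[abs_def] .
    have "(\<lambda>n. cdf (distr (M n) borel (W n)) x) \<longlonglongrightarrow> cdf std_normal x"
      using wc ic unfolding weak_conv_m_def weak_conv_def by blast
    moreover have "cdf (distr (M n) borel (W n)) x = prob_space.prob (M n) {\<omega> \<in> space (M n). W n \<omega> \<le> x}" for n
      unfolding cdf_def using measW[of n]
      by (subst measure_distr) (auto intro!: arg_cong[where f="measure (M n)"])
    ultimately show ?thesis unfolding std_normal_cdf_def by simp
  qed
  define z where "z = std_normal_quantile (1 - \<alpha> / 2)"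
  have \<Phi>z: "std_normal_cdf z = 1 - \<alpha> / 2" unfolding z_def by (rule std_quantile) (use alpha in auto)
  have \<Phi>0: "std_normal_cdf 0 = 1 / 2" using std_sym[of 0] by simp
  have z0: "z > 0"
  proof (rule ccontr)
    assume "\<not> z > 0"
    then have "z < 0 \<or> z = 0" by auto
    then have "std_normal_cdf z \<le> std_normal_cdf 0" using std_strict_mono[of z 0] by auto
    then show False using \<Phi>z \<Phi>0 alpha by simp
  qed
  have LB: "liminf (\<lambda>n. ereal (prob_space.prob (M n) {\<omega> \<in> space (M n).
            \<bar>Xbar n \<omega> - \<mu> n\<bar> \<le> z * sqrt (Vhat n \<omega>)}))
         \<ge> ereal (std_normal_cdf (z * r) - std_normal_cdf (- (z * r)))"
    if r: "0 < r" "r < 1" for r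
  proof -
    define \<epsilon> where "\<epsilon> = (1 - r\<^sup>2) * c3 / 2"
    have r2: "r\<^sup>2 < 1" using r by (simp add: power_less_one_iff)
    have \<epsilon>0: "\<epsilon> > 0" unfolding \<epsilon>_def using r2 c_pos by simp
    define bad where "bad n = prob_space.prob (M n) {\<omega> \<in> space (M n).
           real n * prob_space.variance (M n) (Xbar n) - real n * Vhat n \<omega> > \<epsilon>}" for n
    define a where "a n = prob_space.prob (M n) {\<omega> \<in> space (M n). W n \<omega> \<le> z * r}
        - prob_space.prob (M n) {\<omega> \<in> space (M n). W n \<omega> \<le> - (z * r)} - bad n" for n
    have alim: "a \<longlonglongrightarrow> std_normal_cdf (z * r) - std_normal_cdf (- (z * r)) - 0"
      unfolding a_def bad_def by (intro tendsto_diff cdfconv Vhat_cons \<epsilon>0)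
    have ev: "eventually (\<lambda>n. a n \<le> prob_space.prob (M n) {\<omega> \<in> space (M n).
            \<bar>Xbar n \<omega> - \<mu> n\<bar> \<le> z * sqrt (Vhat n \<omega>)}) sequentially"
      using evn
    proof eventually_elim
      case (elim n)
      interpret Mn: prob_space "M n" by (rule prob)
      have n1: "n \<ge> 1" and vn: "v n > c3 / 2" using elim by auto
      have vpos: "v n > 0" using vn c_pos by linarith
      have \<sigma>pos: "\<sigma> n > 0" unfolding \<sigma>_def using vpos n1 by simp
      have mSum: "(\<lambda>\<omega>. \<Sum>i\<in>S n. X n i \<omega>) \<in> borel_measurable (M n)"
        by (rule borel_measurable_sum) (use measX S_sub in blast)
      have mXbar[measurable]: "Xbar n \<in> borel_measurable (M n)"
        unfolding Xbar_def using mSum by measurable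
      have [measurable]: "W n \<in> borel_measurable (M n)" by (rule measW)
      have [measurable]: "Vhat n \<in> borel_measurable (M n)" by (rule Vhat_meas)
      define T where "T = {\<omega> \<in> space (M n). \<bar>Xbar n \<omega> - \<mu> n\<bar> \<le> z * sqrt (Vhat n \<omega>)}"
      define A where "A = {\<omega> \<in> space (M n). W n \<omega> \<le> z * r}"
      define B where "B = {\<omega> \<in> space (M n). W n \<omega> \<le> - (z * r)}"
      define Bd where "Bd = {\<omega> \<in> space (M n). real n * prob_space.variance (M n) (Xbar n) - real n * Vhat n \<omega> > \<epsilon>}"
      define G where "G j = {\<omega> \<in> space (M n). \<bar>X n j \<omega> - \<mu> n\<bar> > c1}" for j
      define Gc where "Gc = (\<Union>j\<in>S n. G j)"
      have sT: "T \<in> sets (M n)" unfolding T_def by measurable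
      have sA: "A \<in> sets (M n)" unfolding A_def by measurable
      have sB: "B \<in> sets (M n)" unfolding B_def by measurable
      have sBd: "Bd \<in> sets (M n)" unfolding Bd_def by measurable
      have sG: "G j \<in> sets (M n)" if "j \<in> S n" for j
      proof -
        have [measurable]: "X n j \<in> borel_measurable (M n)" using measX S_sub that by blast
        show ?thesis unfolding G_def by measurable
      qed
      have sGc: "Gc \<in> sets (M n)" unfolding Gc_def using sG finite_subset[OF S_sub finV] by blast
      have mGc: "Mn.prob Gc = 0"
      proof -
        have "Mn.prob Gc \<le> (\<Sum>j\<in>S n. Mn.prob (G j))" unfolding Gc_def
          by (rule Mn.finite_measure_subadditive_finite) (use sG finite_subset[OF S_sub finV] in auto)
        also have "\<dots> = 0" using bounded unfolding G_def by simp
        finally show ?thesis using measure_nonneg[of "M n" Gc] by linarith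
      qed
      have incl: "A \<subseteq> T \<union> B \<union> Bd \<union> Gc"
      proof
        fix \<omega> assume \<omega>A: "\<omega> \<in> A"
        show "\<omega> \<in> T \<union> B \<union> Bd \<union> Gc"
        proof (rule ccontr)
          assume "\<omega> \<notin> T \<union> B \<union> Bd \<union> Gc"
          then have nB: "\<omega> \<notin> B" and nBd: "\<omega> \<notin> Bd" and nGc: "\<omega> \<notin> Gc" and nT: "\<omega> \<notin> T" by auto
          have sp: "\<omega> \<in> space (M n)" using \<omega>A unfolding A_def by auto
          have Wb: "\<bar>W n \<omega>\<bar> \<le> z * r" using \<omega>A nB sp unfolding A_def B_def by auto
          have inb: "\<bar>X n j \<omega> - \<mu> n\<bar> \<le> c1" if "j \<in> S n" for j
            using nGc sp that unfolding Gc_def G_def by auto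
          have vb: "v n - real n * Vhat n \<omega> \<le> \<epsilon>" using nBd sp unfolding Bd_def v_def by auto
          have sum_m: "(\<Sum>j\<in>S n. prob_space.expectation (M n) (X n j)) = real n * \<mu> n"
            unfolding \<mu>_def using n1 by simp
          have "W n \<omega> = (\<Sum>j\<in>S n. (X n j \<omega> - prob_space.expectation (M n) (X n j)) / \<sigma> n)"
            unfolding W_def
          proof (rule sum.cong[OF refl])
            fix j assume "j \<in> S n"
            then have "\<bar>X n j \<omega> - \<mu> n\<bar> \<le> c1" by (rule inb)
            then have "max (\<mu> n - c1) (min (\<mu> n + c1) (X n j \<omega>)) = X n j \<omega>"
              by (auto simp: max_def min_def abs_le_iff)
            then show "(max (\<mu> n - c1) (min (\<mu> n + c1) (X n j \<omega>)) - prob_space.expectation (M n) (X n j)) / \<sigma> n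
                = (X n j \<omega> - prob_space.expectation (M n) (X n j)) / \<sigma> n" by simp
          qed
          also have "\<dots> = ((\<Sum>j\<in>S n. X n j \<omega>) - (\<Sum>j\<in>S n. prob_space.expectation (M n) (X n j))) / \<sigma> n"
            by (simp add: sum_divide_distrib[symmetric] sum_subtractf)
          also have "\<dots> = real n * (Xbar n \<omega> - \<mu> n) / \<sigma> n"
            unfolding sum_m Xbar_def using n1 \<sigma>pos by (simp add: field_simps)
          finally have Wf: "W n \<omega> = real n * (Xbar n \<omega> - \<mu> n) / \<sigma> n" .
          have dev: "\<bar>Xbar n \<omega> - \<mu> n\<bar> = \<sigma> n / real n * \<bar>W n \<omega>\<bar>"
          proof -
            have "\<bar>real n * (Xbar n \<omega> - \<mu> n) / \<sigma> n\<bar> = real n * \<bar>Xbar n \<omega> - \<mu> n\<bar> / \<sigma> n"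
              using \<sigma>pos by (simp add: abs_mult abs_divide)
            then show ?thesis unfolding Wf using \<sigma>pos n1 by simp
          qed
          have eps_le: "\<epsilon> \<le> (1 - r\<^sup>2) * v n" 
          proof -
            have "(1 - r\<^sup>2) * (c3 / 2) \<le> (1 - r\<^sup>2) * v n" using vn r2 by (intro mult_left_mono) auto
            then show ?thesis unfolding \<epsilon>_def by simp
          qed
          have sig2: "(\<sigma> n / real n)\<^sup>2 = v n / real n"
            unfolding \<sigma>_def using vpos n1 by (simp add: power_divide power2_eq_square)
          have "(r * (\<sigma> n / real n))\<^sup>2 \<le> Vhat n \<omega>"
          proof -
            have "r\<^sup>2 * v n \<le> real n * Vhat n \<omega>" using vb eps_le by (simp add: algebra_simps)
            then have "r\<^sup>2 * v n / real n \<le> Vhat n \<omega>" using n1 by (simp add: field_simps)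
            moreover have "(r * (\<sigma> n / real n))\<^sup>2 = r\<^sup>2 * v n / real n"
              unfolding power_mult_distrib sig2 by simp
            ultimately show ?thesis by simp
          qed
          then have rs: "r * (\<sigma> n / real n) \<le> sqrt (Vhat n \<omega>)" by (rule real_le_rsqrt)
          have "\<bar>Xbar n \<omega> - \<mu> n\<bar> \<le> \<sigma> n / real n * (z * r)"
            unfolding dev using Wb \<sigma>pos n1 by (intro mult_left_mono) auto
          also have "\<dots> = z * (r * (\<sigma> n / real n))" by simp
          also have "\<dots> \<le> z * sqrt (Vhat n \<omega>)" using rs z0 by (intro mult_left_mono) auto
          finally have "\<omega> \<in> T" unfolding T_def using sp by simp
          then show False using nT by simp
        qed
      qed
      have "Mn.prob A \<le> Mn.prob (T \<union> B \<union> Bd \<union> Gc)"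
        by (rule Mn.finite_measure_mono[OF incl]) (use sT sB sBd sGc in auto)
      also have "\<dots> \<le> Mn.prob T + Mn.prob B + Mn.prob Bd + Mn.prob Gc"
        using measure_Un_le[where M="M n" and A="T \<union> B \<union> Bd" and B=Gc] measure_Un_le[where M="M n" and A="T \<union> B" and B=Bd]
          measure_Un_le[where M="M n" and A=T and B=B]
          sT sB sBd sGc by auto
      finally show ?case unfolding a_def bad_def using mGc unfolding A_def B_def T_def Bd_def by linarith
    qed
    have "ereal (std_normal_cdf (z * r) - std_normal_cdf (- (z * r))) = liminf (\<lambda>n. ereal (a n))"
      using alim by (intro lim_imp_Liminf[symmetric]) auto
    also have "\<dots> \<le> liminf (\<lambda>n. ereal (prob_space.prob (M n) {\<omega> \<in> space (M n).
            \<bar>Xbar n \<omega> - \<mu> n\<bar> \<le> z * sqrt (Vhat n \<omega>)}))"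
      using ev by (intro Liminf_mono) (auto elim: eventually_mono)
    finally show ?thesis .
  qed
  show ?thesis unfolding z_def[symmetric]
  proof (rule ereal_le_epsilon2)
    fix e :: real assume e: "e > 0"
    have "isCont std_normal_cdf z" by (rule std_cont)
    then obtain d where d: "d > 0" "\<And>y. dist y z < d \<Longrightarrow> dist (std_normal_cdf y) (std_normal_cdf z) < e / 2"
      unfolding continuous_at_eps_delta using e by (metis half_gt_zero)
    define r where "r = max (1 / 2) (1 - d / (2 * z))"
    have r: "0 < r" "r < 1" unfolding r_def using d z0 by auto
    have "z - z * r \<le> d / 2"
    proof -
      have "1 - d / (2 * z) \<le> r" unfolding r_def by simp
      then have "z * (1 - d / (2 * z)) \<le> z * r" using z0 by (intro mult_left_mono) auto
      moreover have "z * (1 - d / (2 * z)) = z - d / 2" using z0 by (simp add: field_simps)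
      ultimately show ?thesis by linarith
    qed
    moreover have "z * r \<le> z" using r z0 by simp
    ultimately have "dist (z * r) z < d" using d by (simp add: dist_real_def)
    then have "\<bar>std_normal_cdf (z * r) - std_normal_cdf z\<bar> < e / 2" using d(2) by (simp add: dist_real_def)
    then have "std_normal_cdf (z * r) - std_normal_cdf (- (z * r)) \<ge> 1 - \<alpha> - e"
      using \<Phi>z std_sym[of "z * r"] by linarith
    then have "ereal (1 - \<alpha> - e) \<le> liminf (\<lambda>n. ereal (prob_space.prob (M n) {\<omega> \<in> space (M n).
            \<bar>Xbar n \<omega> - \<mu> n\<bar> \<le> z * sqrt (Vhat n \<omega>)}))"
      using LB[OF r] by (meson ereal_less_eq(3) order_trans)
    then have "ereal (1 - \<alpha> - e) + ereal e \<le> liminf (\<lambda>n. ereal (prob_space.prob (M n) {\<omega> \<in> space (M n).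
            \<bar>Xbar n \<omega> - \<mu> n\<bar> \<le> z * sqrt (Vhat n \<omega>)})) + ereal e"
      by (rule add_right_mono)
    then show "ereal (1 - \<alpha>) \<le> liminf (\<lambda>n. ereal (prob_space.prob (M n) {\<omega> \<in> space (M n).
            \<bar>Xbar n \<omega> - \<mu> n\<bar> \<le> z * sqrt (Vhat n \<omega>)})) + ereal e"
      by simp
  qed
qed

end
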